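(* In a qubit stabilizer subsystem code, let $U$ be a bare-CSP unitary supported on $\bigcup_{j=0}^{m}R_j$ for regions $R_0,\dots,R_m$ of physical qubits. If $R_0$ and each $R_j^+:=B(R_j,2^{j-1}s_U)$, $j=1,\dots,m$, are dressed-cleanable, then the logical unitary $U_L$ implemented by $U$ (i.e. $V^\dagger UV=U_L\otimes\mathrm{Id}_J$) belongs to $\mathcal{C}_m$.
   Context: Stabilizer subsystem code: stabilizer group (abelian subgroup of the Pauli group not containing $-\mathrm{Id}$) with code space its $+1$ eigenspace, isomorphic via an encoding isometry $V$ to an encoded space of encoded qubits (with a basis such that codespace-preserving physical Paulis implement encoded Paulis), divided into logical subsystem $\mathcal{H}_L$ and junk $\mathcal{H}_J$. $\Pi=VV^\dagger$. $A$ is CSP if $[A,\Pi]=0$; dressed-CSP if moreover $V^\dagger AV=A_L\otimes A_J$ (implements $A_L\otimes A_J$); bare-CSP if also $A_J=\mathrm{Id}_J$. Physical qubits are vertices of a graph with graph distance; $B(R,s)$ is the set of qubits within distance $s$ of $R$; supported on $R$ means of the form $A_R\otimes\mathrm{Id}_{R^c}$. Spread: $s_U=\min\{s\in[0,\infty]:$ for all regions $R$ and operators $X$ supported on $R$, $UXU^\dagger$ is supported on $B(R,s)\}$. $R$ is dressed-cleanable if for every Pauli $P_L$ on $\mathcal{H}_L$ there is a dressed-CSP operator supported on $R^c$ implementing $P_L\otimes P_J$ for some $P_J$. Clifford hierarchy on $\mathcal{H}_L$: $\mathcal{C}_0=\mathbb{C}\,\mathrm{Id}_L$, $\mathcal{C}_1=\{cP: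 c\in\mathbb{C}, P$ Pauli on $\mathcal{H}_L\}$, and $\mathcal{C}_k=\{U:\forall P\in\mathcal{C}_1,\ UPU^\dagger P^\dagger\in\mathcal{C}_{k-1}\}$ for $k\ge2$. *)

theory Defs
  imports "Jordan_Normal_Form.Schur_Decomposition" "HOL-Library.Extended_Nat"
begin

(* Physical qubits are 0..<n; a physical operator is a complex 2^n x 2^n matrix
   (Jordan_Normal_Form 'mat'); the computational basis index x < 2^n has
   value qbit x q on qubit q.
   Encoded qubits are 0..<k+g: qubits 0..<k form the logical subsystem H_L,
   qubits k..<k+g form the junk subsystem H_J; an encoded operator is a
   2^(k+g) x 2^(k+g) matrix and A_L (x) A_J is 'kron A_L A_J' (low bits = L). *)

definition qbit :: "nat \<Rightarrow> nat \<Rightarrow> bool" where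
  "qbit x q = odd (x div 2 ^ q)"

datatype pauli1 = PI | PX | PY | PZ

fun pauli1_entry :: "pauli1 \<Rightarrow> bool \<Rightarrow> bool \<Rightarrow> complex" where
  "pauli1_entry PI a b = (if a = b then 1 else 0)"
| "pauli1_entry PX a b = (if a \<noteq> b then 1 else 0)"
| "pauli1_entry PY a b = (if a \<noteq> b then (if a then \<i> else - \<i>) else 0)"
| "pauli1_entry PZ a b = (if a = b then (if a then -1 else 1) else 0)"

definition pauli_string :: "nat \<Rightarrow> (nat \<Rightarrow> pauli1) \<Rightarrow> complex mat" where
  "pauli_string n p = mat (2 ^ n) (2 ^ n)
     (\<lambda>(x, y). \<Prod>q<n. pauli1_entry (p q) (qbit x q) (qbit y q))"

definition pauli_group :: "nat \<Rightarrow> complex mat set" where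
  "pauli_group n = {c \<cdot>\<^sub>m pauli_string n p | c p. c \<in> {1, -1, \<i>, - \<i>}}"

text \<open>Kronecker product; the first factor acts on the low-order qubits.\<close>
definition kron :: "complex mat \<Rightarrow> complex mat \<Rightarrow> complex mat" where
  "kron A B = mat (dim_row A * dim_row B) (dim_col A * dim_col B)
     (\<lambda>(i, j). A $$ (i mod dim_row A, j mod dim_col A) * B $$ (i div dim_row A, j div dim_col A))"

definition stabilizer_group :: "nat \<Rightarrow> complex mat set \<Rightarrow> bool" where
  "stabilizer_group n S \<longleftrightarrow>
     S \<subseteq> pauli_group n \<and> 1\<^sub>m (2 ^ n) \<in> S \<and>
     (\<forall>a\<in>S. \<forall>b\<in>S. a * b \<in> S) \<and> (\<forall>a\<in>S. mat_adjoint a \<in> S) \<and>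
     (\<forall>a\<in>S. \<forall>b\<in>S. a * b = b * a) \<and> - 1\<^sub>m (2 ^ n) \<notin> S"

definition code_space :: "nat \<Rightarrow> complex mat set \<Rightarrow> complex vec set" where
  "code_space n S = {v \<in> carrier_vec (2 ^ n). \<forall>s\<in>S. s *\<^sub>v v = v}"

definition code_proj :: "complex mat \<Rightarrow> complex mat" where
  "code_proj V = V * mat_adjoint V"

definition stabilizer_subsystem_code ::
    "nat \<Rightarrow> nat \<Rightarrow> nat \<Rightarrow> complex mat set \<Rightarrow> complex mat \<Rightarrow> bool" where
  "stabilizer_subsystem_code n k g S V \<longleftrightarrow>
     stabilizer_group n S \<and>
     V \<in> carrier_mat (2 ^ n) (2 ^ (k + g)) \<and>
     mat_adjoint V * V = 1\<^sub>m (2 ^ (k + g)) \<and>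
     {V *\<^sub>v w | w. w \<in> carrier_vec (2 ^ (k + g))} = code_space n S \<and>
     (\<forall>P\<in>pauli_group n. P * code_proj V = code_proj V * P \<longrightarrow>
        (\<exists>PL\<in>pauli_group k. \<exists>PJ\<in>pauli_group g. mat_adjoint V * P * V = kron PL PJ))"

definition CSP :: "nat \<Rightarrow> complex mat \<Rightarrow> complex mat \<Rightarrow> bool" where
  "CSP n V A \<longleftrightarrow> A \<in> carrier_mat (2 ^ n) (2 ^ n) \<and> A * code_proj V = code_proj V * A"

definition implements ::
    "nat \<Rightarrow> nat \<Rightarrow> complex mat \<Rightarrow> complex mat \<Rightarrow> complex mat \<Rightarrow> complex mat \<Rightarrow> bool" where
  "implements k g V A AL AJ \<longleftrightarrow>
     AL \<in> carrier_mat (2 ^ k) (2 ^ k) \<and> AJ \<in> carrier_mat (2 ^ g) (2 ^ g) \<and>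
     mat_adjoint V * A * V = kron AL AJ"

definition dressed_CSP :: "nat \<Rightarrow> nat \<Rightarrow> nat \<Rightarrow> complex mat \<Rightarrow> complex mat \<Rightarrow> bool" where
  "dressed_CSP n k g V A \<longleftrightarrow> CSP n V A \<and> (\<exists>AL AJ. implements k g V A AL AJ)"

definition bare_CSP :: "nat \<Rightarrow> nat \<Rightarrow> nat \<Rightarrow> complex mat \<Rightarrow> complex mat \<Rightarrow> bool" where
  "bare_CSP n k g V A \<longleftrightarrow> CSP n V A \<and> (\<exists>AL. implements k g V A AL (1\<^sub>m (2 ^ g)))"

text \<open>A is supported on R: A = A_R (x) Id_(R^c).\<close>
definition supported_on :: "nat \<Rightarrow> nat set \<Rightarrow> complex mat \<Rightarrow> bool" where
  "supported_on n R A \<longleftrightarrow> A \<in> carrier_mat (2 ^ n) (2 ^ n) \<and>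
     (\<exists>f. \<forall>x<2 ^ n. \<forall>y<2 ^ n. A $$ (x, y) =
        (if (\<forall>q<n. q \<notin> R \<longrightarrow> qbit x q = qbit y q)
         then f (\<lambda>q. q \<in> R \<and> qbit x q) (\<lambda>q. q \<in> R \<and> qbit y q) else 0))"

text \<open>Graph distance on the vertex set 0..<n with edge relation E (infinite if disconnected).\<close>
definition gdist :: "nat \<Rightarrow> (nat \<Rightarrow> nat \<Rightarrow> bool) \<Rightarrow> nat \<Rightarrow> nat \<Rightarrow> enat" where
  "gdist n E a b = (INF l \<in> {l. (a, b) \<in> {(u, v). u < n \<and> v < n \<and> E u v} ^^ l}. enat l)"

definition qball :: "nat \<Rightarrow> (nat \<Rightarrow> nat \<Rightarrow> bool) \<Rightarrow> nat set \<Rightarrow> enat \<Rightarrow> nat set" where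
  "qball n E R s = {q. q < n \<and> (\<exists>r\<in>R. r < n \<and> gdist n E r q \<le> s)}"

definition spread :: "nat \<Rightarrow> (nat \<Rightarrow> nat \<Rightarrow> bool) \<Rightarrow> complex mat \<Rightarrow> enat" where
  "spread n E U = (LEAST s. \<forall>R X. supported_on n R X \<longrightarrow>
       supported_on n (qball n E R s) (U * X * mat_adjoint U))"

definition dressed_cleanable :: "nat \<Rightarrow> nat \<Rightarrow> nat \<Rightarrow> complex mat \<Rightarrow> nat set \<Rightarrow> bool" where
  "dressed_cleanable n k g V R \<longleftrightarrow>
     (\<forall>PL\<in>pauli_group k. \<exists>A PJ. PJ \<in> pauli_group g \<and>
        supported_on n ({..<n} - R) A \<and> dressed_CSP n k g V A \<and> implements k g V A PL PJ)"

fun clifford :: "nat \<Rightarrow> nat \<Rightarrow> complex mat set" where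
  "clifford k 0 = {c \<cdot>\<^sub>m 1\<^sub>m (2 ^ k) | c. True}"
| "clifford k (Suc 0) = {c \<cdot>\<^sub>m P | c P. P \<in> pauli_group k}"
| "clifford k (Suc (Suc j)) = {U \<in> carrier_mat (2 ^ k) (2 ^ k).
     \<forall>P\<in>clifford k (Suc 0). U * P * mat_adjoint U * mat_adjoint P \<in> clifford k (Suc j)}"

end

theory Submission imports Defs begin


lemma adj_def: "mat_adjoint (A::complex mat) = mat (dim_col A) (dim_row A) (\<lambda>(i,j). cnj (A $$ (j,i)))"
  unfolding mat_adjoint_def
  by (rule eq_matI) (auto simp: mat_of_rows_def)

lemma adj_dims[simp]: "dim_row (mat_adjoint (A::complex mat)) = dim_col A"
  "dim_col (mat_adjoint (A::complex mat)) = dim_row A"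
  by (simp_all add: adj_def)

lemma adj_index[simp]: "i < dim_col A \<Longrightarrow> j < dim_row A \<Longrightarrow>
   mat_adjoint (A::complex mat) $$ (i,j) = cnj (A $$ (j,i))"
  by (simp add: adj_def)

lemma adj_carrier[simp]: "A \<in> carrier_mat a b \<Longrightarrow> mat_adjoint (A::complex mat) \<in> carrier_mat b a"
  by (metis adj_dims carrier_matD carrier_matI)

lemma adj_adj[simp]: "mat_adjoint (mat_adjoint (A::complex mat)) = A"
  by (rule eq_matI) auto

lemma adj_mult: assumes "A \<in> carrier_mat a b" "B \<in> carrier_mat b c"
  shows "mat_adjoint ((A::complex mat) * B) = mat_adjoint B * mat_adjoint A"
  using assms
  by (intro eq_matI) (auto simp: scalar_prod_def sum_conjugate intro!: sum.cong)

lemma adj_one[simp]: "mat_adjoint (1\<^sub>m n :: complex mat) = 1\<^sub>m n"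
  by (rule eq_matI) auto

lemma adj_smult: "mat_adjoint (c \<cdot>\<^sub>m (A::complex mat)) = cnj c \<cdot>\<^sub>m mat_adjoint A"
  by (rule eq_matI) auto

lemma qbit_bit: "qbit x q = bit x q" by (simp add: qbit_def bit_iff_odd)

lemma qbit_ge: "(x::nat) < 2^n \<Longrightarrow> n \<le> q \<Longrightarrow> \<not> qbit x q"
proof -
  assume "x < 2^n" "n \<le> q"
  then have "x < 2^q" by (meson order_less_le_trans one_le_numeral power_increasing)
  then show ?thesis by (simp add: qbit_def)
qed

lemma lt_pow_bits: "(\<And>q. n \<le> q \<Longrightarrow> \<not> qbit x q) \<Longrightarrow> (x::nat) < 2^n"
proof -
  assume a: "\<And>q. n \<le> q \<Longrightarrow> \<not> qbit x q"
  have "take_bit n x = x"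
    apply (rule bit_eqI) using a by (metis bit_take_bit_iff qbit_bit not_less)
  then show ?thesis by (simp add: take_bit_nat_eq_self_iff)
qed

lemma bits_eq: "(x::nat) < 2^n \<Longrightarrow> y < 2^n \<Longrightarrow> (\<And>q. q < n \<Longrightarrow> qbit x q = qbit y q) \<Longrightarrow> x = y"
  apply (rule bit_eqI)
  by (metis qbit_bit qbit_ge not_less)

primrec bnum :: "nat \<Rightarrow> (nat \<Rightarrow> bool) \<Rightarrow> nat" where
  "bnum 0 a = 0"
| "bnum (Suc n) a = (if a n then set_bit n (bnum n a) else bnum n a)"

lemma qbit_bnum[simp]: "qbit (bnum n a) q \<longleftrightarrow> q < n \<and> a q"
  by (induction n) (auto simp: qbit_bit bit_set_bit_iff less_Suc_eq)

lemma bnum_lt[simp]: "bnum n a < 2^n"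
  by (rule lt_pow_bits) simp

lemma qbit_flip[simp]: "qbit (flip_bit q x) i \<longleftrightarrow> (if i = q then \<not> qbit x q else qbit x i)"
  by (auto simp: qbit_bit bit_flip_bit_iff)

lemma flip_lt: "(x::nat) < 2^n \<Longrightarrow> q < n \<Longrightarrow> flip_bit q x < 2^n"
  by (rule lt_pow_bits) (auto simp: qbit_ge)

lemma flip_flip[simp]: "flip_bit q (flip_bit q (x::nat)) = x"
  by (rule bit_eqI) (auto simp: bit_flip_bit_iff)

lemma qbit_add_pow: assumes "(z::nat) < 2^n" "q \<le> n"
  shows "qbit (z + 2^n) q \<longleftrightarrow> (if q = n then True else qbit z q)"
proof -
  have nb: "\<not> bit z n" using assms qbit_ge qbit_bit by auto
  have "z + 2^n = Bit_Operations.or z (2^n)"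
    by (rule disjunctive_add_eq_or, rule bit_eqI) (auto simp: bit_exp_iff nb bit_and_iff)
  then show ?thesis by (auto simp: qbit_bit bit_or_iff bit_exp_iff)
qed

lemma sum_prod_bits:
  fixes F :: "nat \<Rightarrow> bool \<Rightarrow> 'a::comm_semiring_1"
  shows "(\<Sum>z<2^n. \<Prod>q<n. F q (qbit z q)) = (\<Prod>q<n. F q False + F q True)"
proof (induction n)
  case 0
  then show ?case by simp
next
  case (Suc n)
  let ?M = "(2::nat)^n"
  have split: "{..<2^Suc n} = {..<?M} \<union> {?M..<?M+?M}" by auto
  have A: "(\<Sum>z<?M. \<Prod>q<Suc n. F q (qbit z q)) = (\<Sum>z<?M. \<Prod>q<n. F q (qbit z q)) * F n False"
    by (auto simp: sum_distrib_right qbit_ge intro!: sum.cong)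
  have B: "(\<Sum>z\<in>{?M..<?M+?M}. \<Prod>q<Suc n. F q (qbit z q)) = (\<Sum>z<?M. \<Prod>q<n. F q (qbit z q)) * F n True"
  proof -
    have "(\<Sum>z\<in>{?M..<?M+?M}. \<Prod>q<Suc n. F q (qbit z q)) = (\<Sum>z\<in>{0..<?M}. \<Prod>q<Suc n. F q (qbit (z+?M) q))"
      using sum.shift_bounds_nat_ivl[of "\<lambda>z. \<Prod>q<Suc n. F q (qbit z q)" 0 ?M ?M] by simp
    also have "\<dots> = (\<Sum>z<?M. (\<Prod>q<n. F q (qbit z q)) * F n True)"
      by (rule sum.cong) (auto simp: qbit_add_pow intro!: prod.cong)
    finally show ?thesis by (simp add: sum_distrib_right)
  qed
  have "(\<Sum>z<2^Suc n. \<Prod>q<Suc n. F q (qbit z q)) =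
     (\<Sum>z<?M. \<Prod>q<Suc n. F q (qbit z q)) + (\<Sum>z\<in>{?M..<?M+?M}. \<Prod>q<Suc n. F q (qbit z q))"
    unfolding split by (rule sum.union_disjoint) auto
  also have "\<dots> = (\<Prod>q<n. F q False + F q True) * (F n False + F n True)"
    using A B Suc by (simp add: distrib_left)
  finally show ?case by simp
qed

lemma sum_mod_div:
  fixes f :: "nat \<Rightarrow> nat \<Rightarrow> 'a::comm_monoid_add"
  shows "(\<Sum>z<a*b. f (z mod a) (z div a)) = (\<Sum>z2<b. \<Sum>z1<a. f z1 z2)"
proof (induction b)
  case 0 then show ?case by simp
next
  case (Suc b)
  have split: "{..<a * Suc b} = {..<a*b} \<union> {a*b..<a*b+a}" by auto
  have "(\<Sum>z\<in>{a*b..<a*b+a}. f (z mod a) (z div a)) = (\<Sum>z\<in>{0..<a}. f ((z+a*b) mod a) ((z+a*b) div a))"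
    using sum.shift_bounds_nat_ivl[of "\<lambda>z. f (z mod a) (z div a)" 0 "a*b" a] by (simp add: add.commute)
  also have "\<dots> = (\<Sum>z1<a. f z1 b)"
    by (auto intro!: sum.cong simp: atLeast0LessThan)
  finally have "(\<Sum>z\<in>{a*b..<a*b+a}. f (z mod a) (z div a)) = (\<Sum>z1<a. f z1 b)" .
  then show ?case unfolding split using Suc
    by (subst sum.union_disjoint) (auto simp: add.commute)
qed




abbreviation e1 where "e1 \<equiv> pauli1_entry"

lemma e1_herm: "cnj (e1 s b a) = e1 s a b"
  by (cases s) auto

lemma e1_sq: "e1 s a False * e1 s False c + e1 s a True * e1 s True c = (if a = c then 1 else 0)"
  by (cases s; cases a; cases c) auto

definition sgn1 :: "pauli1 \<Rightarrow> pauli1 \<Rightarrow> complex" where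
  "sgn1 s t = (if s = PI \<or> t = PI \<or> s = t then 1 else -1)"

lemma e1_comm: "e1 s a False * e1 t False c + e1 s a True * e1 t True c =
   sgn1 s t * (e1 t a False * e1 s False c + e1 t a True * e1 s True c)"
  by (cases s; cases t; cases a; cases c) (auto simp: sgn1_def)

lemma e1_orth: "(\<Sum>b\<in>UNIV. \<Sum>b'\<in>UNIV. cnj (e1 s b b') * e1 t b b') = (if s = t then 2 else 0)"
  by (cases s; cases t) (auto simp: UNIV_bool)

lemma e1_orth': "cnj (e1 s False False) * e1 t False False + cnj (e1 s False True) * e1 t False True +
   (cnj (e1 s True False) * e1 t True False + cnj (e1 s True True) * e1 t True True) = (if s = t then 2 else 0)"
  by (cases s; cases t) auto

lemma UNIV_pauli1: "(UNIV :: pauli1 set) = {PI, PX, PY, PZ}"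
  using pauli1.exhaust by auto

lemma e1_compl: "(\<Sum>s\<in>UNIV. cnj (e1 s b b') * e1 s a a') = (if b = a \<and> b' = a' then 2 else 0)"
  by (cases b; cases b'; cases a; cases a') (auto simp: UNIV_pauli1)

lemma sgn1_sq: "sgn1 s t * sgn1 s t = 1" by (auto simp: sgn1_def)
lemma sgn1_sym: "sgn1 s t = sgn1 t s" by (auto simp: sgn1_def)

abbreviation ps where "ps \<equiv> pauli_string"

lemma ps_carrier[simp]: "ps n p \<in> carrier_mat (2^n) (2^n)"
  by (simp add: pauli_string_def)
lemma ps_dims[simp]: "dim_row (ps n p) = 2^n" "dim_col (ps n p) = 2^n"
  by (simp_all add: pauli_string_def)
lemma ps_index: "x < 2^n \<Longrightarrow> y < 2^n \<Longrightarrow> ps n p $$ (x,y) = (\<Prod>q<n. e1 (p q) (qbit x q) (qbit y q))"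
  by (simp add: pauli_string_def)

lemma ps_adj: "mat_adjoint (ps n p) = ps n p"
  by (rule eq_matI) (auto simp: ps_index e1_herm)

lemma ps_mult_index:
  assumes "x < 2^n" "y < 2^n"
  shows "(ps n p * ps n t) $$ (x,y) =
     (\<Prod>q<n. e1 (p q) (qbit x q) False * e1 (t q) False (qbit y q) + e1 (p q) (qbit x q) True * e1 (t q) True (qbit y q))"
proof -
  have "(ps n p * ps n t) $$ (x,y) = (\<Sum>z<2^n. ps n p $$ (x,z) * ps n t $$ (z,y))"
    using assms by (simp add: scalar_prod_def atLeast0LessThan)
  also have "\<dots> = (\<Sum>z<2^n. \<Prod>q<n. e1 (p q) (qbit x q) (qbit z q) * e1 (t q) (qbit z q) (qbit y q))"
    using assms by (auto simp: ps_index prod.distrib intro!: sum.cong)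
  also have "\<dots> = (\<Prod>q<n. e1 (p q) (qbit x q) False * e1 (t q) False (qbit y q) + e1 (p q) (qbit x q) True * e1 (t q) True (qbit y q))"
    by (rule sum_prod_bits[where F = "\<lambda>q b. e1 (p q) (qbit x q) b * e1 (t q) b (qbit y q)"])
  finally show ?thesis .
qed

lemma prod_ind: "(\<Prod>q\<in>A. (if P q then 1 else 0 :: 'a::comm_semiring_1)) = (if \<forall>q\<in>A. P q then 1 else 0)"
  if "finite A" using that by (induction A rule: finite_induct) auto

lemma ps_sq: "ps n p * ps n p = 1\<^sub>m (2^n)"
proof (rule eq_matI)
  fix x y assume "x < dim_row (1\<^sub>m (2^n) :: complex mat)" "y < dim_col (1\<^sub>m (2^n) :: complex mat)"
  then have xy: "x < 2^n" "y < 2^n" by auto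
  have "(ps n p * ps n p) $$ (x,y) = (\<Prod>q<n. (if qbit x q = qbit y q then 1 else 0))"
    by (simp only: ps_mult_index[OF xy] e1_sq)
  also have "\<dots> = (if x = y then 1 else 0)"
    using xy by (auto simp: prod_ind bits_eq)
  finally show "(ps n p * ps n p) $$ (x,y) = 1\<^sub>m (2^n) $$ (x,y)" using xy by simp
qed auto

definition csgn :: "nat \<Rightarrow> (nat \<Rightarrow> pauli1) \<Rightarrow> (nat \<Rightarrow> pauli1) \<Rightarrow> complex" where
  "csgn n p t = (\<Prod>q<n. sgn1 (p q) (t q))"

lemma csgn_sq: "csgn n p t * csgn n p t = 1"
  unfolding csgn_def by (simp add: prod.distrib[symmetric] sgn1_sq)

lemma csgn_sym: "csgn n p t = csgn n t p"
  unfolding csgn_def by (simp add: sgn1_sym)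

lemma ps_comm: "ps n p * ps n t = csgn n p t \<cdot>\<^sub>m (ps n t * ps n p)"
proof (rule eq_matI)
  fix x y assume "x < dim_row (csgn n p t \<cdot>\<^sub>m (ps n t * ps n p))" "y < dim_col (csgn n p t \<cdot>\<^sub>m (ps n t * ps n p))"
  then have xy: "x < 2^n" "y < 2^n" by auto
  show "(ps n p * ps n t) $$ (x,y) = (csgn n p t \<cdot>\<^sub>m (ps n t * ps n p)) $$ (x,y)"
  proof -
    have "(ps n p * ps n t) $$ (x,y) = (\<Prod>q<n. sgn1 (p q) (t q) * (e1 (t q) (qbit x q) False * e1 (p q) False (qbit y q) + e1 (t q) (qbit x q) True * e1 (p q) True (qbit y q)))"
      unfolding ps_mult_index[OF xy] by (rule prod.cong[OF refl], rule e1_comm)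
    also have "\<dots> = csgn n p t * (ps n t * ps n p) $$ (x,y)"
      by (simp only: ps_mult_index[OF xy] csgn_def prod.distrib)
    also have "\<dots> = (csgn n p t \<cdot>\<^sub>m (ps n t * ps n p)) $$ (x,y)"
      using xy by simp
    finally show ?thesis .
  qed
qed auto

lemma ps_unitary: "ps n p * mat_adjoint (ps n p) = 1\<^sub>m (2^n)" "mat_adjoint (ps n p) * ps n p = 1\<^sub>m (2^n)"
  by (simp_all add: ps_adj ps_sq)

definition Zq :: "nat \<Rightarrow> nat \<Rightarrow> complex mat" where "Zq n q = ps n (\<lambda>i. if i = q then PZ else PI)"
definition Xq :: "nat \<Rightarrow> nat \<Rightarrow> complex mat" where "Xq n q = ps n (\<lambda>i. if i = q then PX else PI)"

lemma prod_single_out: "q < (n::nat) \<Longrightarrow> (\<Prod>i<n. f i) = f q * (\<Prod>i\<in>{..<n}-{q}. f i)"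
  by (rule prod.remove) auto

lemma Zq_index: assumes "x < 2^n" "y < 2^n" "q < n"
  shows "Zq n q $$ (x,y) = (if x = y then (if qbit x q then -1 else 1) else 0)"
proof -
  have "Zq n q $$ (x,y) = e1 PZ (qbit x q) (qbit y q) * (\<Prod>i\<in>{..<n}-{q}. (if qbit x i = qbit y i then 1 else 0))"
    using assms unfolding Zq_def by (simp add: ps_index prod_single_out[OF assms(3)])
  also have "\<dots> = (if x = y then (if qbit x q then -1 else 1) else 0)"
    using assms by (auto simp: prod_ind intro: bits_eq)
  finally show ?thesis .
qed

lemma Xq_index: assumes "x < 2^n" "y < 2^n" "q < n"
  shows "Xq n q $$ (x,y) = (if y = flip_bit q x then 1 else 0)"
proof -
  have "Xq n q $$ (x,y) = e1 PX (qbit x q) (qbit y q) * (\<Prod>i\<in>{..<n}-{q}. (if qbit x i = qbit y i then 1 else 0))"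
    using assms unfolding Xq_def by (simp add: ps_index prod_single_out[OF assms(3)])
  also have "\<dots> = (if y = flip_bit q x then 1 else 0)"
  proof -
    have "y = flip_bit q x \<longleftrightarrow> (qbit x q \<noteq> qbit y q \<and> (\<forall>i\<in>{..<n}-{q}. qbit x i = qbit y i))"
    proof
      assume "y = flip_bit q x" then show "qbit x q \<noteq> qbit y q \<and> (\<forall>i\<in>{..<n}-{q}. qbit x i = qbit y i)" by auto
    next
      assume "qbit x q \<noteq> qbit y q \<and> (\<forall>i\<in>{..<n}-{q}. qbit x i = qbit y i)"
      then show "y = flip_bit q x"
        using assms by (intro bits_eq[of _ n]) (auto simp: flip_lt)
    qed
    then show ?thesis by (auto simp: prod_ind)
  qed
  finally show ?thesis .
qed

lemma Zq_carrier[simp]: "Zq n q \<in> carrier_mat (2^n) (2^n)" by (simp add: Zq_def)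
lemma Xq_carrier[simp]: "Xq n q \<in> carrier_mat (2^n) (2^n)" by (simp add: Xq_def)

lemma mult_index_sum: "A \<in> carrier_mat a b \<Longrightarrow> B \<in> carrier_mat b c \<Longrightarrow> i < a \<Longrightarrow> j < c \<Longrightarrow>
  (A * B) $$ (i,j) = (\<Sum>z<b. A $$ (i,z) * B $$ (z,j))"
  by (auto simp: scalar_prod_def atLeast0LessThan)

lemma sum_single: "finite A \<Longrightarrow> a \<in> A \<Longrightarrow> (\<And>z. z \<in> A \<Longrightarrow> z \<noteq> a \<Longrightarrow> f z = 0) \<Longrightarrow> sum f A = f a"
  by (metis sum.remove sum.neutral add_0_right DiffE insertCI)

lemma mult_Xq_index: assumes "A \<in> carrier_mat (2^n) (2^n)" "x < 2^n" "y < 2^n" "q < n"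
  shows "(A * Xq n q) $$ (x,y) = A $$ (x, flip_bit q y)"
proof -
  have "(A * Xq n q) $$ (x,y) = (\<Sum>z<2^n. A $$ (x,z) * Xq n q $$ (z,y))"
    using assms by (simp add: mult_index_sum[of _ "2^n" "2^n" _ "2^n"])
  also have "\<dots> = A $$ (x, flip_bit q y) * Xq n q $$ (flip_bit q y, y)"
    by (rule sum_single) (use assms in \<open>auto simp: Xq_index flip_lt\<close>)
  finally show ?thesis using assms by (simp add: Xq_index flip_lt)
qed

lemma Xq_mult_index: assumes "A \<in> carrier_mat (2^n) (2^n)" "x < 2^n" "y < 2^n" "q < n"
  shows "(Xq n q * A) $$ (x,y) = A $$ (flip_bit q x, y)"
proof -
  have "(Xq n q * A) $$ (x,y) = (\<Sum>z<2^n. Xq n q $$ (x,z) * A $$ (z,y))"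
    using assms by (simp add: mult_index_sum[of _ "2^n" "2^n" _ "2^n"])
  also have "\<dots> = Xq n q $$ (x, flip_bit q x) * A $$ (flip_bit q x, y)"
    by (rule sum_single) (use assms in \<open>auto simp: Xq_index flip_lt\<close>)
  finally show ?thesis using assms by (simp add: Xq_index flip_lt)
qed

lemma mult_Zq_index: assumes "A \<in> carrier_mat (2^n) (2^n)" "x < 2^n" "y < 2^n" "q < n"
  shows "(A * Zq n q) $$ (x,y) = A $$ (x, y) * (if qbit y q then -1 else 1)"
proof -
  have "(A * Zq n q) $$ (x,y) = (\<Sum>z<2^n. A $$ (x,z) * Zq n q $$ (z,y))"
    using assms by (simp add: mult_index_sum[of _ "2^n" "2^n" _ "2^n"])
  also have "\<dots> = A $$ (x, y) * Zq n q $$ (y, y)"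
    by (rule sum_single) (use assms in \<open>auto simp: Zq_index\<close>)
  finally show ?thesis using assms by (simp add: Zq_index)
qed

lemma Zq_mult_index: assumes "A \<in> carrier_mat (2^n) (2^n)" "x < 2^n" "y < 2^n" "q < n"
  shows "(Zq n q * A) $$ (x,y) = (if qbit x q then -1 else 1) * A $$ (x, y)"
proof -
  have "(Zq n q * A) $$ (x,y) = (\<Sum>z<2^n. Zq n q $$ (x,z) * A $$ (z,y))"
    using assms by (simp add: mult_index_sum[of _ "2^n" "2^n" _ "2^n"])
  also have "\<dots> = Zq n q $$ (x, x) * A $$ (x, y)"
    by (rule sum_single) (use assms in \<open>auto simp: Zq_index\<close>)
  finally show ?thesis using assms by (simp add: Zq_index)
qed




lemma smult_smult_mat: "a \<cdot>\<^sub>m (b \<cdot>\<^sub>m (A::complex mat)) = (a * b) \<cdot>\<^sub>m A"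
  by (rule eq_matI) auto
lemma one_smult_mat': "(1::complex) \<cdot>\<^sub>m A = A"
  by (rule eq_matI) auto

definition agr :: "nat \<Rightarrow> nat set \<Rightarrow> nat \<Rightarrow> nat \<Rightarrow> bool" where
  "agr n R x y \<longleftrightarrow> (\<forall>q<n. q \<notin> R \<longrightarrow> qbit x q = qbit y q)"
definition same :: "nat \<Rightarrow> nat set \<Rightarrow> nat \<Rightarrow> nat \<Rightarrow> bool" where
  "same n R x y \<longleftrightarrow> (\<forall>q<n. q \<in> R \<longrightarrow> qbit x q = qbit y q)"

lemma restr_eq: "x < 2^n \<Longrightarrow> x' < 2^n \<Longrightarrow> same n R x x' \<Longrightarrow>
   (\<lambda>q. q \<in> R \<and> qbit x q) = (\<lambda>q. q \<in> R \<and> qbit x' q)"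
  by (rule ext) (metis not_less qbit_ge same_def)

lemma supp_val:
  assumes "supported_on n R A" "x < 2^n" "y < 2^n" "x' < 2^n" "y' < 2^n"
    "same n R x x'" "same n R y y'" "agr n R x' y'"
  shows "A $$ (x,y) = (if agr n R x y then A $$ (x',y') else 0)"
proof -
  obtain f where f: "\<forall>x<2 ^ n. \<forall>y<2 ^ n. A $$ (x, y) =
        (if (\<forall>q<n. q \<notin> R \<longrightarrow> qbit x q = qbit y q)
         then f (\<lambda>q. q \<in> R \<and> qbit x q) (\<lambda>q. q \<in> R \<and> qbit y q) else 0)"
    using assms(1) unfolding supported_on_def by blast
  show ?thesis
    using f[rule_format, of x y] f[rule_format, of x' y'] assms(2-8)
      restr_eq[of x n x' R] restr_eq[of y n y' R]
    unfolding agr_def by auto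
qed

lemma supp_zero: "supported_on n R A \<Longrightarrow> x < 2^n \<Longrightarrow> y < 2^n \<Longrightarrow> \<not> agr n R x y \<Longrightarrow> A $$ (x,y) = 0"
proof -
  assume a: "supported_on n R A" "x < 2^n" "y < 2^n" "\<not> agr n R x y"
  obtain f where f: "\<forall>x<2 ^ n. \<forall>y<2 ^ n. A $$ (x, y) =
        (if (\<forall>q<n. q \<notin> R \<longrightarrow> qbit x q = qbit y q)
         then f (\<lambda>q. q \<in> R \<and> qbit x q) (\<lambda>q. q \<in> R \<and> qbit y q) else 0)"
    using a(1) unfolding supported_on_def by blast
  have nc: "\<not> (\<forall>q<n. q \<notin> R \<longrightarrow> qbit x q = qbit y q)" using a(4) by (simp add: agr_def)
  have eq: "A $$ (x, y) = (if (\<forall>q<n. q \<notin> R \<longrightarrow> qbit x q = qbit y q)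
         then f (\<lambda>q. q \<in> R \<and> qbit x q) (\<lambda>q. q \<in> R \<and> qbit y q) else 0)"
    using f a(2,3) by blast
  show ?thesis by (subst eq) (rule if_not_P[OF nc])
qed

lemma supp_carrier: "supported_on n R A \<Longrightarrow> A \<in> carrier_mat (2^n) (2^n)"
  unfolding supported_on_def by auto

lemma supp_intro:
  assumes "A \<in> carrier_mat (2^n) (2^n)"
    "\<And>x y. x < 2^n \<Longrightarrow> y < 2^n \<Longrightarrow> \<not> agr n R x y \<Longrightarrow> A $$ (x,y) = 0"
    "\<And>x y x' y'. x < 2^n \<Longrightarrow> y < 2^n \<Longrightarrow> x' < 2^n \<Longrightarrow> y' < 2^n \<Longrightarrow> agr n R x y \<Longrightarrow>
       agr n R x' y' \<Longrightarrow> same n R x x' \<Longrightarrow> same n R y y' \<Longrightarrow> A $$ (x,y) = A $$ (x',y')"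
  shows "supported_on n R A"
  unfolding supported_on_def
proof (intro conjI exI allI impI)
  show "A \<in> carrier_mat (2^n) (2^n)" by fact
  fix x y :: nat assume xy: "x < 2^n" "y < 2^n"
  let ?f = "\<lambda>a b. A $$ (bnum n a, bnum n b)"
  show "A $$ (x, y) = (if \<forall>q<n. q \<notin> R \<longrightarrow> qbit x q = qbit y q
          then ?f (\<lambda>q. q \<in> R \<and> qbit x q) (\<lambda>q. q \<in> R \<and> qbit y q) else 0)"
  proof (cases "agr n R x y")
    case True
    have "A $$ (x,y) = ?f (\<lambda>q. q \<in> R \<and> qbit x q) (\<lambda>q. q \<in> R \<and> qbit y q)"
      by (rule assms(3)) (use xy True in \<open>auto simp: agr_def same_def\<close>)
    then show ?thesis using True by (simp add: agr_def)
  next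
    case False
    have nc: "\<not> (\<forall>q<n. q \<notin> R \<longrightarrow> qbit x q = qbit y q)" using False by (simp add: agr_def)
    show ?thesis unfolding if_not_P[OF nc] using assms(2)[OF xy False] .
  qed
qed

lemma supp_commute:
  assumes X: "supported_on n R X" and Y: "supported_on n T Y" and RT: "R \<inter> T = {}"
  shows "X * Y = Y * X"
proof -
  have cX: "X \<in> carrier_mat (2^n) (2^n)" and cY: "Y \<in> carrier_mat (2^n) (2^n)"
    using X Y supp_carrier by auto
  show ?thesis
  proof (rule eq_matI)
    fix x y assume "x < dim_row (Y * X)" "y < dim_col (Y * X)"
    then have xy: "x < 2^n" "y < 2^n" using cX cY by auto
    define z0 where "z0 = bnum n (\<lambda>q. if q \<in> T then qbit x q else qbit y q)"
    define w0 where "w0 = bnum n (\<lambda>q. if q \<in> R then qbit x q else qbit y q)"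
    have z0: "z0 < 2^n" and w0: "w0 < 2^n" unfolding z0_def w0_def by auto
    have "(X * Y) $$ (x,y) = (\<Sum>z<2^n. X $$ (x,z) * Y $$ (z,y))"
      using mult_index_sum[OF cX cY xy] .
    also have "\<dots> = X $$ (x,z0) * Y $$ (z0,y)"
    proof (rule sum_single)
      fix z assume z: "z \<in> {..<2^n}" "z \<noteq> z0"
      show "X $$ (x,z) * Y $$ (z,y) = 0"
      proof (rule ccontr)
        assume "X $$ (x,z) * Y $$ (z,y) \<noteq> 0"
        then have "agr n R x z" "agr n T z y" using supp_zero[OF X] supp_zero[OF Y] xy z by force+
        then have "z = z0" unfolding z0_def using RT z xy
          by (intro bits_eq[of _ n]) (auto simp: agr_def)
        with z show False by simp
      qed
    qed (use z0 in auto)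
    finally have L: "(X * Y) $$ (x,y) = X $$ (x,z0) * Y $$ (z0,y)" .
    have "(Y * X) $$ (x,y) = (\<Sum>z<2^n. Y $$ (x,z) * X $$ (z,y))"
      using mult_index_sum[OF cY cX xy] .
    also have "\<dots> = Y $$ (x,w0) * X $$ (w0,y)"
    proof (rule sum_single)
      fix z assume z: "z \<in> {..<2^n}" "z \<noteq> w0"
      show "Y $$ (x,z) * X $$ (z,y) = 0"
      proof (rule ccontr)
        assume "Y $$ (x,z) * X $$ (z,y) \<noteq> 0"
        then have "agr n T x z" "agr n R z y" using supp_zero[OF X] supp_zero[OF Y] xy z by force+
        then have "z = w0" unfolding w0_def using RT z xy
          by (intro bits_eq[of _ n]) (auto simp: agr_def)
        with z show False by simp
      qed
    qed (use w0 in auto)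
    finally have R': "(Y * X) $$ (x,y) = Y $$ (x,w0) * X $$ (w0,y)" .
    show "(X * Y) $$ (x,y) = (Y * X) $$ (x,y)"
    proof (cases "agr n (R \<union> T) x y")
      case True
      have "X $$ (x,z0) = (if agr n R x z0 then X $$ (w0,y) else 0)"
        by (rule supp_val[OF X xy(1) z0 w0 xy(2)])
          (use RT in \<open>auto simp: same_def agr_def z0_def w0_def\<close>)
      moreover have "agr n R x z0" using True RT by (auto simp: agr_def z0_def)
      moreover have "Y $$ (z0,y) = (if agr n T z0 y then Y $$ (x,w0) else 0)"
        by (rule supp_val[OF Y z0 xy(2) xy(1) w0])
          (use RT True in \<open>auto simp: same_def agr_def z0_def w0_def\<close>)
      moreover have "agr n T z0 y" by (auto simp: agr_def z0_def)
      ultimately show ?thesis using L R' by simp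
    next
      case False
      then obtain q where q: "q < n" "q \<notin> R" "q \<notin> T" "qbit x q \<noteq> qbit y q"
        by (auto simp: agr_def)
      have "\<not> agr n R x z0" using q by (auto simp: agr_def z0_def)
      then have "X $$ (x,z0) = 0" using supp_zero[OF X xy(1) z0] by simp
      moreover have "\<not> agr n T x w0" using q by (auto simp: agr_def w0_def)
      then have "Y $$ (x,w0) = 0" using supp_zero[OF Y xy(1) w0] by simp
      ultimately show ?thesis using L R' by simp
    qed
  qed (use cX cY in auto)
qed

definition clr :: "nat \<Rightarrow> nat set \<Rightarrow> nat \<Rightarrow> nat" where
  "clr n T x = bnum n (\<lambda>q. q \<notin> T \<and> qbit x q)"

lemma clr_lt[simp]: "clr n T x < 2^n" by (simp add: clr_def)

lemma commutant:
  assumes cY: "Y \<in> carrier_mat (2^n) (2^n)"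
    and com: "\<And>q. q < n \<Longrightarrow> q \<notin> R \<Longrightarrow> Y * Zq n q = Zq n q * Y \<and> Y * Xq n q = Xq n q * Y"
  shows "supported_on n R Y"
proof -
  have Z0: "Y $$ (x,y) = 0" if "x < 2^n" "y < 2^n" "q < n" "q \<notin> R" "qbit x q \<noteq> qbit y q" for x y q
  proof -
    have "(Y * Zq n q) $$ (x,y) = (Zq n q * Y) $$ (x,y)" using com that by simp
    then have "Y $$ (x, y) * (if qbit y q then -1 else 1) = (if qbit x q then -1 else 1) * Y $$ (x, y)"
      using that cY by (simp add: mult_Zq_index Zq_mult_index)
    then show ?thesis using that(5) by (cases "qbit x q") auto
  qed
  have XF: "Y $$ (x,y) = Y $$ (flip_bit q x, flip_bit q y)" if "x < 2^n" "y < 2^n" "q < n" "q \<notin> R" for x y q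
  proof -
    have fy: "flip_bit q y < 2^n" using that flip_lt by auto
    have "(Y * Xq n q) $$ (x, flip_bit q y) = (Xq n q * Y) $$ (x, flip_bit q y)" using com that by simp
    then show ?thesis using that cY fy by (simp add: mult_Xq_index Xq_mult_index)
  qed
  have clear: "\<forall>x y. x < 2^n \<longrightarrow> y < 2^n \<longrightarrow> (\<forall>q\<in>T. qbit x q = qbit y q) \<longrightarrow>
      Y $$ (x,y) = Y $$ (clr n T x, clr n T y)"
    if "finite T" "T \<subseteq> {q. q < n \<and> q \<notin> R}" for T
    using that
  proof (induction T rule: finite_induct)
    case empty
    show ?case
    proof (intro allI impI)
      fix x y :: nat assume xy: "x < 2^n" "y < 2^n"
      have "clr n {} x = x" "clr n {} y = y" unfolding clr_def
        using xy by (auto intro!: bits_eq[of _ n])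
      then show "Y $$ (x,y) = Y $$ (clr n {} x, clr n {} y)" by simp
    qed
  next
    case (insert q T)
    show ?case
    proof (intro allI impI)
      fix x y :: nat assume xy: "x < 2^n" "y < 2^n" and ag: "\<forall>p\<in>insert q T. qbit x p = qbit y p"
      have q: "q < n" "q \<notin> R" using insert by auto
      let ?x1 = "clr n T x" and ?y1 = "clr n T y"
      have IH: "Y $$ (x,y) = Y $$ (?x1, ?y1)" using insert xy ag by auto
      have x1: "?x1 < 2^n" "?y1 < 2^n" unfolding clr_def by auto
      have qb: "qbit ?x1 q = qbit ?y1 q" using ag insert q by (auto simp: clr_def)
      show "Y $$ (x,y) = Y $$ (clr n (insert q T) x, clr n (insert q T) y)"
      proof (cases "qbit ?x1 q")
        case True
        have b1: "qbit (flip_bit q ?x1) i = qbit (clr n (insert q T) x) i"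
             "qbit (flip_bit q ?y1) i = qbit (clr n (insert q T) y) i" if "i < n" for i
          using True qb x1 q insert(2) that by (auto simp: clr_def)
        have e1: "flip_bit q ?x1 = clr n (insert q T) x" "flip_bit q ?y1 = clr n (insert q T) y"
          using b1 x1 q by (auto intro!: bits_eq[of _ n] flip_lt)
        show ?thesis using IH XF[OF x1 q] e1 by simp
      next
        case False
        have b1: "qbit ?x1 i = qbit (clr n (insert q T) x) i"
             "qbit ?y1 i = qbit (clr n (insert q T) y) i" if "i < n" for i
          using False qb x1 q insert(2) that by (auto simp: clr_def)
        have e1: "?x1 = clr n (insert q T) x" "?y1 = clr n (insert q T) y"
          using b1 x1 q by (auto intro!: bits_eq[of _ n])
        show ?thesis using IH e1 by simp
      qed
    qed
  qed
  let ?T = "{q. q < n \<and> q \<notin> R}"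
  have clearT: "Y $$ (x,y) = Y $$ (clr n ?T x, clr n ?T y)" if "x < 2^n" "y < 2^n" "agr n R x y" for x y
    using clear[of ?T] that by (auto simp: agr_def)
  have clr_same: "clr n ?T x = clr n ?T x'" if "same n R x x'" for x x'
    using that unfolding clr_def same_def by (intro bits_eq[of _ n]) auto
  show ?thesis
  proof (rule supp_intro[OF cY])
    fix x y assume "x < 2^n" "y < 2^n" "\<not> agr n R x y"
    then show "Y $$ (x,y) = 0" using Z0 by (auto simp: agr_def)
  next
    fix x y x' y' assume "x < 2^n" "y < 2^n" "x' < 2^n" "y' < 2^n" "agr n R x y"
       "agr n R x' y'" "same n R x x'" "same n R y y'"
    then show "Y $$ (x,y) = Y $$ (x',y')"
      using clearT[of x y] clearT[of x' y'] clr_same[of x x'] clr_same[of y y'] by simp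
  qed
qed




lemma ps_supp: assumes "\<And>q. q < n \<Longrightarrow> q \<notin> C \<Longrightarrow> p q = PI"
  shows "supported_on n C (ps n p)"
proof (rule supp_intro)
  show "ps n p \<in> carrier_mat (2^n) (2^n)" by simp
next
  fix x y assume xy: "x < 2^n" "y < 2^n" "\<not> agr n C x y"
  then obtain q where q: "q < n" "q \<notin> C" "qbit x q \<noteq> qbit y q" by (auto simp: agr_def)
  have h0: "e1 (p q) (qbit x q) (qbit y q) = 0" using q assms by simp
  show "ps n p $$ (x,y) = 0" unfolding ps_index[OF xy(1,2)]
    apply (rule prod_zero) apply simp using q h0 by (intro bexI[of _ q]) auto
next
  fix x y x' y' assume h: "x < 2^n" "y < 2^n" "x' < 2^n" "y' < 2^n" "agr n C x y"
       "agr n C x' y'" "same n C x x'" "same n C y y'"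
  show "ps n p $$ (x,y) = ps n p $$ (x',y')"
    unfolding ps_index[OF h(1,2)] ps_index[OF h(3,4)]
  proof (rule prod.cong[OF refl])
    fix q assume "q \<in> {..<n}"
    then show "e1 (p q) (qbit x q) (qbit y q) = e1 (p q) (qbit x' q) (qbit y' q)"
      using h assms[of q] by (cases "q \<in> C") (auto simp: agr_def same_def)
  qed
qed

lemma Zq_supp: "supported_on n {q} (Zq n q)" unfolding Zq_def by (rule ps_supp) auto
lemma Xq_supp: "supported_on n {q} (Xq n q)" unfolding Xq_def by (rule ps_supp) auto

lemma supp_commute_ZX: "supported_on n R A \<Longrightarrow> q \<notin> R \<Longrightarrow>
   A * Zq n q = Zq n q * A \<and> A * Xq n q = Xq n q * A"
  using supp_commute[OF _ Zq_supp] supp_commute[OF _ Xq_supp] by blast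

lemma supp_from: assumes "supported_on n T A" "\<And>q. q < n \<Longrightarrow> q \<notin> R \<Longrightarrow> q \<notin> T"
  shows "supported_on n R A"
proof (rule commutant[OF supp_carrier[OF assms(1)]])
  fix q assume "q < n" "q \<notin> R"
  then have "q \<notin> T" using assms(2) by auto
  then show "A * Zq n q = Zq n q * A \<and> A * Xq n q = Xq n q * A" using supp_commute_ZX[OF assms(1)] by blast
qed

lemma supp_mono: "supported_on n R A \<Longrightarrow> R \<subseteq> R' \<Longrightarrow> supported_on n R' A"
  by (erule supp_from) auto

lemma supp_all: "A \<in> carrier_mat (2^n) (2^n) \<Longrightarrow> supported_on n {..<n} A"
  by (rule commutant) auto

lemma supp_restrict: "supported_on n R A \<Longrightarrow> supported_on n (R \<inter> {..<n}) A"
  by (erule supp_from) auto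

lemma supp_inter: assumes "supported_on n R A" "supported_on n T A" shows "supported_on n (R \<inter> T) A"
proof (rule commutant[OF supp_carrier[OF assms(1)]])
  fix q assume "q < n" "q \<notin> R \<inter> T"
  then show "A * Zq n q = Zq n q * A \<and> A * Xq n q = Xq n q * A"
    using supp_commute_ZX[OF assms(1)] supp_commute_ZX[OF assms(2)] by blast
qed

lemma comm_mult: fixes A B Z :: "complex mat"
  assumes c: "A \<in> carrier_mat N N" "B \<in> carrier_mat N N" "Z \<in> carrier_mat N N"
    and hA: "A * Z = Z * A" and hB: "B * Z = Z * B"
  shows "A * B * Z = Z * (A * B)"
proof -
  have "A * B * Z = A * (B * Z)" using c by (rule assoc_mult_mat)
  also have "\<dots> = A * (Z * B)" by (simp add: hB)
  also have "\<dots> = (A * Z) * B" using c by (intro assoc_mult_mat[symmetric])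
  also have "\<dots> = (Z * A) * B" by (simp add: hA)
  also have "\<dots> = Z * (A * B)" using c by (intro assoc_mult_mat)
  finally show ?thesis .
qed

lemma supp_mult: assumes "supported_on n R A" "supported_on n R B"
  shows "supported_on n R (A * B)"
proof (rule commutant)
  have cA: "A \<in> carrier_mat (2^n) (2^n)" and cB: "B \<in> carrier_mat (2^n) (2^n)"
    using assms supp_carrier by auto
  then show "A * B \<in> carrier_mat (2^n) (2^n)" by simp
  fix q assume q: "q < n" "q \<notin> R"
  have a: "A * Zq n q = Zq n q * A" "A * Xq n q = Xq n q * A"
      "B * Zq n q = Zq n q * B" "B * Xq n q = Xq n q * B"
    using supp_commute_ZX[OF assms(1) q(2)] supp_commute_ZX[OF assms(2) q(2)] by auto
  show "A * B * Zq n q = Zq n q * (A * B) \<and> A * B * Xq n q = Xq n q * (A * B)"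
    using comm_mult[OF cA cB Zq_carrier a(1,3)] comm_mult[OF cA cB Xq_carrier a(2,4)] by simp
qed

lemma Zq_adj: "mat_adjoint (Zq n q) = Zq n q" by (simp add: Zq_def ps_adj)
lemma Xq_adj: "mat_adjoint (Xq n q) = Xq n q" by (simp add: Xq_def ps_adj)

lemma supp_adj: assumes "supported_on n R A"
  shows "supported_on n R (mat_adjoint A)"
proof (rule commutant)
  have cA: "A \<in> carrier_mat (2^n) (2^n)" using assms supp_carrier by auto
  then show "mat_adjoint A \<in> carrier_mat (2^n) (2^n)" by simp
  fix q assume q: "q < n" "q \<notin> R"
  have a: "A * Zq n q = Zq n q * A" "A * Xq n q = Xq n q * A"
    using supp_commute_ZX[OF assms(1) q(2)] by auto
  have "mat_adjoint (A * Zq n q) = mat_adjoint (Zq n q * A)"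
       "mat_adjoint (A * Xq n q) = mat_adjoint (Xq n q * A)" using a by auto
  then show "mat_adjoint A * Zq n q = Zq n q * mat_adjoint A \<and> mat_adjoint A * Xq n q = Xq n q * mat_adjoint A"
    using cA by (simp add: adj_mult[of _ "2^n" "2^n" _ "2^n"] Zq_adj Xq_adj)
qed

lemma supp_one: "supported_on n R (1\<^sub>m (2^n))"
  by (rule commutant) (auto simp: left_mult_one_mat[OF Zq_carrier] right_mult_one_mat[OF Zq_carrier]
     left_mult_one_mat[OF Xq_carrier] right_mult_one_mat[OF Xq_carrier])

lemma supp_smult: "supported_on n R A \<Longrightarrow> supported_on n R (c \<cdot>\<^sub>m A)"
proof (rule commutant)
  assume s: "supported_on n R A"
  then have cA: "A \<in> carrier_mat (2^n) (2^n)" using supp_carrier by auto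
  then show "c \<cdot>\<^sub>m A \<in> carrier_mat (2^n) (2^n)" by simp
  fix q assume q: "q < n" "q \<notin> R"
  show "c \<cdot>\<^sub>m A * Zq n q = Zq n q * (c \<cdot>\<^sub>m A) \<and> c \<cdot>\<^sub>m A * Xq n q = Xq n q * (c \<cdot>\<^sub>m A)"
    using supp_commute_ZX[OF s q(2)] cA
    by (simp add: mult_smult_assoc_mat[OF cA Zq_carrier] mult_smult_assoc_mat[OF cA Xq_carrier]
       mult_smult_distrib[OF Zq_carrier cA] mult_smult_distrib[OF Xq_carrier cA])
qed

lemma supp_empty_scalar: assumes "supported_on n {} A"
  shows "A = A $$ (0,0) \<cdot>\<^sub>m 1\<^sub>m (2^n)"
proof (rule eq_matI)
  have cA: "A \<in> carrier_mat (2^n) (2^n)" using assms supp_carrier by auto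
  fix x y assume "x < dim_row (A $$ (0,0) \<cdot>\<^sub>m 1\<^sub>m (2^n))" "y < dim_col (A $$ (0,0) \<cdot>\<^sub>m 1\<^sub>m (2^n))"
  then have xy: "x < 2^n" "y < 2^n" by auto
  have "A $$ (x,y) = (if agr n {} x y then A $$ (0,0) else 0)"
    by (rule supp_val[OF assms xy]) (auto simp: same_def agr_def)
  moreover have "agr n {} x y \<longleftrightarrow> x = y" using xy by (auto simp: agr_def intro: bits_eq)
  ultimately show "A $$ (x,y) = (A $$ (0,0) \<cdot>\<^sub>m 1\<^sub>m (2^n)) $$ (x,y)" using xy by simp
qed (use assms supp_carrier in auto)

lemma conj_comm:
  fixes P A Z :: "complex mat"
  assumes c: "P \<in> carrier_mat N N" "A \<in> carrier_mat N N" "Z \<in> carrier_mat N N"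
    and AZ: "A * Z = Z * A" and PZ: "P * Z = s \<cdot>\<^sub>m (Z * P)" and s: "s * s = 1"
  shows "P * A * P * Z = Z * (P * A * P)"
proof -
  note as = assoc_mult_mat[of _ N N _ N _ N]
  have cc: "Z * P \<in> carrier_mat N N" "A * (Z * P) \<in> carrier_mat N N" "A * P \<in> carrier_mat N N"
    using c by auto
  have 1: "P * A * P * Z = P * (A * (P * Z))" using c by (simp add: as)
  have 2: "P * (A * (P * Z)) = s \<cdot>\<^sub>m (P * (A * (Z * P)))" unfolding PZ
    by (simp add: mult_smult_distrib[OF c(2) cc(1)] mult_smult_distrib[OF c(1) cc(2)])
  have "P * (A * (Z * P)) = P * ((A * Z) * P)" using c by (simp add: as)
  also have "\<dots> = P * ((Z * A) * P)" by (simp only: AZ)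
  also have "\<dots> = (P * Z) * (A * P)" using c by (simp add: as)
  also have "\<dots> = s \<cdot>\<^sub>m ((Z * P) * (A * P))" unfolding PZ
    by (rule mult_smult_assoc_mat[OF cc(1) cc(3)])
  finally have 3: "P * (A * (Z * P)) = s \<cdot>\<^sub>m ((Z * P) * (A * P))" .
  have "P * A * P * Z = (s * s) \<cdot>\<^sub>m ((Z * P) * (A * P))"
    using 1 2 3 by (simp add: smult_smult_mat)
  also have "\<dots> = Z * (P * A * P)" using s c by (simp add: one_smult_mat' as)
  finally show ?thesis .
qed

lemma supp_conj_ps: assumes "supported_on n R A"
  shows "supported_on n R (ps n p * A * ps n p)"
proof (rule commutant)
  have cA: "A \<in> carrier_mat (2^n) (2^n)" using assms supp_carrier by auto
  then show "ps n p * A * ps n p \<in> carrier_mat (2^n) (2^n)"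
    using mult_carrier_mat[OF mult_carrier_mat[OF ps_carrier cA] ps_carrier] by simp
  fix q assume q: "q < n" "q \<notin> R"
  have a: "A * Zq n q = Zq n q * A" "A * Xq n q = Xq n q * A" using supp_commute_ZX[OF assms q(2)] by auto
  have z: "ps n p * Zq n q = csgn n p (\<lambda>i. if i = q then PZ else PI) \<cdot>\<^sub>m (Zq n q * ps n p)"
    unfolding Zq_def by (rule ps_comm)
  have x: "ps n p * Xq n q = csgn n p (\<lambda>i. if i = q then PX else PI) \<cdot>\<^sub>m (Xq n q * ps n p)"
    unfolding Xq_def by (rule ps_comm)
  show "ps n p * A * ps n p * Zq n q = Zq n q * (ps n p * A * ps n p) \<and>
        ps n p * A * ps n p * Xq n q = Xq n q * (ps n p * A * ps n p)"
    using conj_comm[OF ps_carrier cA Zq_carrier a(1) z csgn_sq]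
      conj_comm[OF ps_carrier cA Xq_carrier a(2) x csgn_sq] by simp
qed




definition grel :: "nat \<Rightarrow> (nat \<Rightarrow> nat \<Rightarrow> bool) \<Rightarrow> (nat \<times> nat) set" where
  "grel n E = {(u, v). u < n \<and> v < n \<and> E u v}"

lemma gdist_grel: "gdist n E a b = (INF l \<in> {l. (a, b) \<in> grel n E ^^ l}. enat l)"
  unfolding gdist_def grel_def ..

lemma gdist_eq: "gdist n E a b = (if \<exists>l. (a,b) \<in> grel n E ^^ l
   then enat (LEAST l. (a,b) \<in> grel n E ^^ l) else \<infinity>)"
proof (cases "\<exists>l. (a,b) \<in> grel n E ^^ l")
  case True
  let ?P = "\<lambda>l. (a,b) \<in> grel n E ^^ l"
  have "gdist n E a b = enat (LEAST l. ?P l)"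
  proof (rule antisym)
    show "gdist n E a b \<le> enat (LEAST l. ?P l)"
      unfolding gdist_grel by (rule INF_lower) (simp add: LeastI_ex[OF True])
    show "enat (LEAST l. ?P l) \<le> gdist n E a b"
      unfolding gdist_grel by (rule INF_greatest) (simp add: Least_le)
  qed
  then show ?thesis using True by simp
next
  case False
  then show ?thesis unfolding gdist_grel by (simp add: top_enat_def)
qed

lemma gdist_le: "(a,b) \<in> grel n E ^^ l \<Longrightarrow> gdist n E a b \<le> enat l"
  unfolding gdist_grel by (rule INF_lower) auto

lemma gdist_obtain: assumes "gdist n E a b = enat d" shows "(a,b) \<in> grel n E ^^ d"
proof (cases "\<exists>l. (a,b) \<in> grel n E ^^ l")
  case True
  then have "d = (LEAST l. (a,b) \<in> grel n E ^^ l)" using assms gdist_eq[of n E a b] by simp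
  then show ?thesis using LeastI_ex[OF True] by simp
next
  case False
  then show ?thesis using assms gdist_eq[of n E a b] by simp
qed

lemma gdist_refl: "gdist n E a a = 0"
proof -
  have "gdist n E a a \<le> enat 0" by (rule gdist_le) simp
  then show ?thesis by (metis le_zero_eq zero_enat_def)
qed

lemma relpow_sym: assumes "\<And>u v. (u,v) \<in> Rel \<Longrightarrow> (v,u) \<in> Rel"
  shows "(a,b) \<in> Rel ^^ l \<Longrightarrow> (b,a) \<in> Rel ^^ l"
proof (induction l arbitrary: a b)
  case 0 then show ?case by simp
next
  case (Suc l)
  then obtain c where c: "(a,c) \<in> Rel ^^ l" "(c,b) \<in> Rel" by auto
  have "(c,a) \<in> Rel ^^ l" using Suc.IH c(1) by blast
  moreover have "(b,c) \<in> Rel" using assms c(2) by blast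
  ultimately have "(b,a) \<in> Rel O Rel ^^ l" by blast
  then show ?case using relpow_add[of 1 l Rel] by simp
qed

lemma gdist_sym: assumes "symp E" shows "gdist n E a b = gdist n E b a"
proof -
  have s: "\<And>u v. (u,v) \<in> grel n E \<Longrightarrow> (v,u) \<in> grel n E"
    using assms by (auto simp: grel_def symp_def)
  have "{l. (a, b) \<in> grel n E ^^ l} = {l. (b, a) \<in> grel n E ^^ l}"
    using relpow_sym[OF s] by blast
  then show ?thesis unfolding gdist_grel by simp
qed

lemma gdist_triangle: "gdist n E a c \<le> gdist n E a b + gdist n E b c"
proof (cases "gdist n E a b = \<infinity> \<or> gdist n E b c = \<infinity>")
  case True then show ?thesis by auto
next
  case False
  then obtain d1 d2 where d: "gdist n E a b = enat d1" "gdist n E b c = enat d2"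
    by (meson not_infinity_eq)
  have "(a,b) \<in> grel n E ^^ d1" "(b,c) \<in> grel n E ^^ d2" using d gdist_obtain by auto
  then have "(a,c) \<in> grel n E ^^ (d1 + d2)" by (auto simp: relpow_add)
  then have "gdist n E a c \<le> enat (d1 + d2)" by (rule gdist_le)
  then show ?thesis using d by simp
qed

lemma qball_sub: "qball n E R s \<subseteq> {..<n}" unfolding qball_def by auto

lemma qball_self: "R \<inter> {..<n} \<subseteq> qball n E R s"
  unfolding qball_def using gdist_refl by force

lemma qball_mono: "R \<subseteq> R' \<Longrightarrow> s \<le> s' \<Longrightarrow> qball n E R s \<subseteq> qball n E R' s'"
  unfolding qball_def by (auto intro: order_trans)

lemma qball_qball: "qball n E (qball n E R s) t \<subseteq> qball n E R (s + t)"
proof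
  fix q assume "q \<in> qball n E (qball n E R s) t"
  then obtain r where r: "r \<in> qball n E R s" "gdist n E r q \<le> t" "q < n" by (auto simp: qball_def)
  then obtain r0 where r0: "r0 \<in> R" "r0 < n" "gdist n E r0 r \<le> s" by (auto simp: qball_def)
  have "gdist n E r0 q \<le> s + t"
    using gdist_triangle[of n E r0 q r] r r0 add_mono order_trans by blast
  then show "q \<in> qball n E R (s + t)" using r r0 by (auto simp: qball_def)
qed

lemma qball_disj: assumes "symp E" "R1 \<subseteq> {..<n}"
  shows "R1 \<inter> qball n E ({..<n} - qball n E R1 s) s = {}"
proof (rule ccontr)
  assume "R1 \<inter> qball n E ({..<n} - qball n E R1 s) s \<noteq> {}"
  then obtain r c where rc: "r \<in> R1" "c \<in> {..<n} - qball n E R1 s" "gdist n E c r \<le> s" "r < n"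
    by (auto simp: qball_def)
  then have "gdist n E r c \<le> s" using gdist_sym[OF assms(1)] by simp
  then have "c \<in> qball n E R1 s" using rc by (auto simp: qball_def)
  then show False using rc by auto
qed

lemma qball_disj1: assumes "symp E" "q < n" "q \<notin> qball n E R s"
  shows "R \<inter> qball n E {q} s = {}"
proof (rule ccontr)
  assume "R \<inter> qball n E {q} s \<noteq> {}"
  then obtain r where r: "r \<in> R" "r < n" "gdist n E q r \<le> s" by (auto simp: qball_def)
  then have "gdist n E r q \<le> s" using gdist_sym[OF assms(1)] by simp
  then show False using assms r by (auto simp: qball_def)
qed




lemma mult_sq: "A \<in> carrier_mat N N \<Longrightarrow> B \<in> carrier_mat N N \<Longrightarrow> (A * B :: complex mat) \<in> carrier_mat N N"
  by simp
lemma assoc_sq: "A \<in> carrier_mat N N \<Longrightarrow> B \<in> carrier_mat N N \<Longrightarrow> C \<in> carrier_mat N N \<Longrightarrow> (A * B * C :: complex mat) = A * (B * C)"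
  by (rule assoc_mult_mat)
lemma one_l: "A \<in> carrier_mat N N \<Longrightarrow> 1\<^sub>m N * A = (A::complex mat)" by simp
lemma one_r: "A \<in> carrier_mat N N \<Longrightarrow> A * 1\<^sub>m N = (A::complex mat)" by simp

lemma cancel_l: assumes "mat_adjoint U * U = 1\<^sub>m N" "U \<in> carrier_mat N N" "W \<in> carrier_mat N N"
  shows "mat_adjoint U * (U * W) = (W :: complex mat)"
proof -
  have "mat_adjoint U * (U * W) = (mat_adjoint U * U) * W"
    by (rule assoc_mult_mat[symmetric]) (use assms in auto)
  also have "\<dots> = W" unfolding assms(1) using assms(3) by (rule left_mult_one_mat)
  finally show ?thesis .
qed

lemma cancel_r: assumes "U * mat_adjoint U = 1\<^sub>m N" "U \<in> carrier_mat N N" "W \<in> carrier_mat N N"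
  shows "U * (mat_adjoint U * W) = (W :: complex mat)"
proof -
  have "U * (mat_adjoint U * W) = (U * mat_adjoint U) * W"
    by (rule assoc_mult_mat[symmetric]) (use assms in auto)
  also have "\<dots> = W" unfolding assms(1) using assms(3) by (rule left_mult_one_mat)
  finally show ?thesis .
qed

lemma conj_back: fixes U X Z :: "complex mat"
  assumes c: "U \<in> carrier_mat N N" "X \<in> carrier_mat N N" "Z \<in> carrier_mat N N" and u: "mat_adjoint U * U = 1\<^sub>m N"
    and com: "X * (U * Z * mat_adjoint U) = (U * Z * mat_adjoint U) * X"
  shows "mat_adjoint U * X * U * Z = Z * (mat_adjoint U * X * U)"
proof -
  have cu: "mat_adjoint U \<in> carrier_mat N N" using c by simp
  have uu: "mat_adjoint U * (U * W) = W" if "W \<in> carrier_mat N N" for W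
    using cancel_l[OF u c(1) that] .
  have "mat_adjoint U * X * U * Z = mat_adjoint U * (X * (U * Z * mat_adjoint U)) * U"
    using c cu by (simp add: u uu assoc_sq[of _ N] mult_sq[of _ N] one_l[of _ N] one_r[of _ N])
  also have "\<dots> = mat_adjoint U * ((U * Z * mat_adjoint U) * X) * U" by (simp only: com)
  also have "\<dots> = Z * (mat_adjoint U * X * U)"
    using c cu by (simp add: u uu assoc_sq[of _ N] mult_sq[of _ N] one_l[of _ N] one_r[of _ N])
  finally show ?thesis .
qed

definition fwd :: "nat \<Rightarrow> (nat \<Rightarrow> nat \<Rightarrow> bool) \<Rightarrow> complex mat \<Rightarrow> enat \<Rightarrow> bool" where
  "fwd n E U s \<longleftrightarrow> (\<forall>R X. R \<subseteq> {..<n} \<longrightarrow> supported_on n R X \<longrightarrow>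
      supported_on n (qball n E R s) (U * X * mat_adjoint U))"
definition bwd :: "nat \<Rightarrow> (nat \<Rightarrow> nat \<Rightarrow> bool) \<Rightarrow> complex mat \<Rightarrow> enat \<Rightarrow> bool" where
  "bwd n E U s \<longleftrightarrow> (\<forall>R X. R \<subseteq> {..<n} \<longrightarrow> supported_on n R X \<longrightarrow>
      supported_on n (qball n E R s) (mat_adjoint U * X * U))"

lemma spread_fwd:
  assumes U: "U \<in> carrier_mat (2^n) (2^n)" "U * mat_adjoint U = 1\<^sub>m (2^n)"
  shows "fwd n E U (spread n E U)"
proof -
  let ?P = "\<lambda>s. \<forall>R X. supported_on n R X \<longrightarrow> supported_on n (qball n E R s) (U * X * mat_adjoint U)"
  have "?P \<infinity>"
  proof (intro allI impI)
    fix R X assume X: "supported_on n R X"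
    have cX: "X \<in> carrier_mat (2^n) (2^n)" using X supp_carrier by auto
    have cK: "U * X * mat_adjoint U \<in> carrier_mat (2^n) (2^n)"
      using U cX by (simp add: mult_sq[of _ "2^n"])
    show "supported_on n (qball n E R \<infinity>) (U * X * mat_adjoint U)"
    proof (cases "\<exists>r\<in>R. r < n")
      case True
      then have "qball n E R \<infinity> = {..<n}" by (auto simp: qball_def)
      then show ?thesis using supp_all[OF cK] by simp
    next
      case False
      then have "R \<inter> {..<n} = {}" by auto
      then have "supported_on n {} X" using supp_restrict[OF X] by simp
      then have Xe: "X = X $$ (0,0) \<cdot>\<^sub>m 1\<^sub>m (2^n)" by (rule supp_empty_scalar)
      have "U * X * mat_adjoint U = X $$ (0,0) \<cdot>\<^sub>m (U * mat_adjoint U)"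
      proof -
        have cU': "mat_adjoint U \<in> carrier_mat (2^n) (2^n)" using U by simp
        have "U * X = X $$ (0,0) \<cdot>\<^sub>m U"
          by (subst Xe) (simp add: mult_smult_distrib[OF U(1) one_carrier_mat] right_mult_one_mat[OF U(1)])
        then show ?thesis by (simp add: mult_smult_assoc_mat[OF U(1) cU'])
      qed
      then show ?thesis using U supp_smult[OF supp_one] by simp
    qed
  qed
  then have "?P (spread n E U)" unfolding spread_def by (rule LeastI)
  then show ?thesis unfolding fwd_def by blast
qed

lemma fwd_bwd:
  assumes E: "symp E" and U: "U \<in> carrier_mat (2^n) (2^n)" "mat_adjoint U * U = 1\<^sub>m (2^n)"
    and f: "fwd n E U s"
  shows "bwd n E U s"
  unfolding bwd_def
proof (intro allI impI)
  fix R X assume R: "R \<subseteq> {..<n}" and X: "supported_on n R X"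
  have cX: "X \<in> carrier_mat (2^n) (2^n)" using X supp_carrier by auto
  show "supported_on n (qball n E R s) (mat_adjoint U * X * U)"
  proof (rule commutant)
    show "mat_adjoint U * X * U \<in> carrier_mat (2^n) (2^n)" using U cX by (simp add: mult_sq[of _ "2^n"])
    fix q assume q: "q < n" "q \<notin> qball n E R s"
    have d: "R \<inter> qball n E {q} s = {}" by (rule qball_disj1[OF E q])
    have sq: "{q} \<subseteq> {..<n}" using q by auto
    have W1: "supported_on n (qball n E {q} s) (U * Zq n q * mat_adjoint U)"
      using f sq Zq_supp unfolding fwd_def by blast
    have W2: "supported_on n (qball n E {q} s) (U * Xq n q * mat_adjoint U)"
      using f sq Xq_supp unfolding fwd_def by blast
    show "mat_adjoint U * X * U * Zq n q = Zq n q * (mat_adjoint U * X * U) \<and>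
          mat_adjoint U * X * U * Xq n q = Xq n q * (mat_adjoint U * X * U)"
      using conj_back[OF U(1) cX Zq_carrier U(2) supp_commute[OF X W1 d]]
        conj_back[OF U(1) cX Xq_carrier U(2) supp_commute[OF X W2 d]] by simp
  qed
qed

lemma K_adj: assumes "U \<in> carrier_mat (2^n) (2^n)"
  shows "mat_adjoint (U * ps n p * mat_adjoint U * ps n p) = ps n p * (U * (ps n p * mat_adjoint U))"
  using assms by (simp add: adj_mult[of _ "2^n" "2^n" _ "2^n"] mult_sq[of _ "2^n"] ps_adj assoc_sq[of _ "2^n"])

lemma K_fwd_bwd:
  assumes E: "symp E" and U: "U \<in> carrier_mat (2^n) (2^n)"
    and f: "fwd n E U s" and b: "bwd n E U s"
  shows "fwd n E (U * ps n p * mat_adjoint U * ps n p) (s + s)"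
    and "bwd n E (U * ps n p * mat_adjoint U * ps n p) (s + s)"
proof -
  let ?P = "ps n p"
  note simps = assoc_sq[of _ "2^n"] mult_sq[of _ "2^n"]
  have qq: "qball n E (qball n E R s) s \<subseteq> qball n E R (s + s)" for R by (rule qball_qball)
  show "fwd n E (U * ?P * mat_adjoint U * ?P) (s + s)"
    unfolding fwd_def
  proof (intro allI impI)
    fix R X assume R: "R \<subseteq> {..<n}" and X: "supported_on n R X"
    have cX: "X \<in> carrier_mat (2^n) (2^n)" using X supp_carrier by auto
    have Y1: "supported_on n R (?P * X * ?P)" by (rule supp_conj_ps[OF X])
    have Y2: "supported_on n (qball n E R s) (mat_adjoint U * (?P * X * ?P) * U)"
      using b R Y1 unfolding bwd_def by blast
    have Y3: "supported_on n (qball n E R s) (?P * (mat_adjoint U * (?P * X * ?P) * U) * ?P)"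
      by (rule supp_conj_ps[OF Y2])
    have Y4: "supported_on n (qball n E (qball n E R s) s) (U * (?P * (mat_adjoint U * (?P * X * ?P) * U) * ?P) * mat_adjoint U)"
      using f qball_sub Y3 unfolding fwd_def by blast
    have eq: "U * ?P * mat_adjoint U * ?P * X * mat_adjoint (U * ?P * mat_adjoint U * ?P) =
        U * (?P * (mat_adjoint U * (?P * X * ?P) * U) * ?P) * mat_adjoint U"
      unfolding K_adj[OF U] using U cX by (simp add: simps)
    show "supported_on n (qball n E R (s + s)) (U * ?P * mat_adjoint U * ?P * X * mat_adjoint (U * ?P * mat_adjoint U * ?P))"
      unfolding eq using supp_mono[OF Y4 qq] .
  qed
  show "bwd n E (U * ?P * mat_adjoint U * ?P) (s + s)"
    unfolding bwd_def
  proof (intro allI impI)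
    fix R X assume R: "R \<subseteq> {..<n}" and X: "supported_on n R X"
    have cX: "X \<in> carrier_mat (2^n) (2^n)" using X supp_carrier by auto
    have Y1: "supported_on n (qball n E R s) (mat_adjoint U * X * U)"
      using b R X unfolding bwd_def by blast
    have Y2: "supported_on n (qball n E R s) (?P * (mat_adjoint U * X * U) * ?P)"
      by (rule supp_conj_ps[OF Y1])
    have Y3: "supported_on n (qball n E (qball n E R s) s) (U * (?P * (mat_adjoint U * X * U) * ?P) * mat_adjoint U)"
      using f qball_sub Y2 unfolding fwd_def by blast
    have Y4: "supported_on n (qball n E (qball n E R s) s) (?P * (U * (?P * (mat_adjoint U * X * U) * ?P) * mat_adjoint U) * ?P)"
      by (rule supp_conj_ps[OF Y3])
    have eq: "mat_adjoint (U * ?P * mat_adjoint U * ?P) * X * (U * ?P * mat_adjoint U * ?P) =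
        ?P * (U * (?P * (mat_adjoint U * X * U) * ?P) * mat_adjoint U) * ?P"
      unfolding K_adj[OF U] using U cX by (simp add: simps)
    show "supported_on n (qball n E R (s + s)) (mat_adjoint (U * ?P * mat_adjoint U * ?P) * X * (U * ?P * mat_adjoint U * ?P))"
      unfolding eq using supp_mono[OF Y4 qq] .
  qed
qed




lemma kron_carrier[simp]: assumes "A \<in> carrier_mat a a'" "B \<in> carrier_mat b b'"
  shows "kron A B \<in> carrier_mat (a*b) (a'*b')"
  using assms by (intro carrier_matI) (auto simp: kron_def)

lemma kron_dims[simp]: "dim_row (kron A B) = dim_row A * dim_row B" "dim_col (kron A B) = dim_col A * dim_col B"
  by (simp_all add: kron_def)

lemma kron_index: "i < dim_row A * dim_row B \<Longrightarrow> j < dim_col A * dim_col B \<Longrightarrow>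
  kron A B $$ (i,j) = A $$ (i mod dim_row A, j mod dim_col A) * B $$ (i div dim_row A, j div dim_col A)"
  by (simp add: kron_def)

lemma mod_div_lt: assumes "i < a * b" shows "i mod a < (a::nat) \<and> i div a < b"
proof -
  have a: "0 < a" using assms by (cases a) auto
  then show ?thesis using assms by (simp add: div_less_iff_less_mult mult.commute)
qed

lemma kron_mult:
  fixes A B C D :: "complex mat"
  assumes c: "A \<in> carrier_mat a a" "C \<in> carrier_mat a a" "B \<in> carrier_mat b b" "D \<in> carrier_mat b b"
  shows "kron A B * kron C D = kron (A * C) (B * D)"
proof (rule eq_matI)
  fix i j assume "i < dim_row (kron (A * C) (B * D))" "j < dim_col (kron (A * C) (B * D))"
  then have ij: "i < a * b" "j < a * b" using c by auto
  have "(kron A B * kron C D) $$ (i,j) = (\<Sum>z<a*b. kron A B $$ (i,z) * kron C D $$ (z,j))"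
    by (rule mult_index_sum[of _ "a*b" "a*b" _ "a*b"]) (use c ij in auto)
  also have "\<dots> = (\<Sum>z<a*b. (\<lambda>z1 z2. A $$ (i mod a, z1) * B $$ (i div a, z2) * (C $$ (z1, j mod a) * D $$ (z2, j div a))) (z mod a) (z div a))"
    by (rule sum.cong) (use c ij mod_div_lt in \<open>auto simp: kron_index\<close>)
  also have "\<dots> = (\<Sum>z2<b. \<Sum>z1<a. A $$ (i mod a, z1) * B $$ (i div a, z2) * (C $$ (z1, j mod a) * D $$ (z2, j div a)))"
    by (rule sum_mod_div)
  also have "\<dots> = (\<Sum>z1<a. A $$ (i mod a, z1) * C $$ (z1, j mod a)) * (\<Sum>z2<b. B $$ (i div a, z2) * D $$ (z2, j div a))"
    by (simp add: sum_product sum.swap[of _ "{..<a}"] mult_ac)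
  also have "\<dots> = (A * C) $$ (i mod a, j mod a) * (B * D) $$ (i div a, j div a)"
    using mod_div_lt[OF ij(1)] mod_div_lt[OF ij(2)]
    by (simp only: mult_index_sum[OF c(1) c(2)] mult_index_sum[OF c(3) c(4)])
  also have "\<dots> = kron (A * C) (B * D) $$ (i,j)"
    using c ij by (simp add: kron_index)
  finally show "(kron A B * kron C D) $$ (i,j) = kron (A * C) (B * D) $$ (i,j)" .
qed (use c in auto)

lemma kron_adj: "mat_adjoint (kron A B) = kron (mat_adjoint A) (mat_adjoint B)"
proof (rule eq_matI)
  fix i j assume "i < dim_row (kron (mat_adjoint A) (mat_adjoint B))" "j < dim_col (kron (mat_adjoint A) (mat_adjoint B))"
  then have ij: "i < dim_col A * dim_col B" "j < dim_row A * dim_row B" by auto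
  show "mat_adjoint (kron A B) $$ (i,j) = kron (mat_adjoint A) (mat_adjoint B) $$ (i,j)"
    using ij mod_div_lt[OF ij(1)] mod_div_lt[OF ij(2)] by (simp add: kron_index)
qed auto

lemma kron_one: "kron (1\<^sub>m a) (1\<^sub>m b) = (1\<^sub>m (a*b) :: complex mat)"
proof (rule eq_matI)
  fix i j assume "i < dim_row (1\<^sub>m (a*b) :: complex mat)" "j < dim_col (1\<^sub>m (a*b) :: complex mat)"
  then have ij: "i < a * b" "j < a * b" by auto
  have "(i mod a = j mod a \<and> i div a = j div a) \<longleftrightarrow> i = j" by (metis div_mult_mod_eq)
  then show "kron (1\<^sub>m a) (1\<^sub>m b) $$ (i,j) = (1\<^sub>m (a*b) :: complex mat) $$ (i,j)"
    using ij mod_div_lt[OF ij(1)] mod_div_lt[OF ij(2)] by (auto simp: kron_index)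
qed auto

lemma kron_smult_l: "kron (c \<cdot>\<^sub>m A) B = c \<cdot>\<^sub>m kron A (B :: complex mat)"
  by (rule eq_matI) (auto simp: kron_index dest!: mod_div_lt)
lemma kron_smult_r: "kron A (c \<cdot>\<^sub>m B) = c \<cdot>\<^sub>m kron A (B :: complex mat)"
  by (rule eq_matI) (auto simp: kron_index dest!: mod_div_lt)

lemma kron_cancel:
  assumes c: "A \<in> carrier_mat a a" "C \<in> carrier_mat a a" "B \<in> carrier_mat b b"
    and nz: "B $$ (i0, j0) \<noteq> 0" "i0 < b" "j0 < b"
    and eq: "kron A B = kron C (B :: complex mat)"
  shows "A = C"
proof (rule eq_matI)
  fix x y assume "x < dim_row C" "y < dim_col C"
  then have xy: "x < a" "y < a" using c by auto
  have "x + a * i0 < a * Suc i0" "a * Suc i0 \<le> a * b" using xy nz by (simp, intro mult_le_mono2, simp)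
  moreover have "y + a * j0 < a * Suc j0" "a * Suc j0 \<le> a * b" using xy nz by (simp, intro mult_le_mono2, simp)
  ultimately have i: "x + a * i0 < a * b" "y + a * j0 < a * b" by linarith+
  have "kron A B $$ (x + a * i0, y + a * j0) = kron C B $$ (x + a * i0, y + a * j0)" using eq by simp
  then have "A $$ (x,y) * B $$ (i0,j0) = C $$ (x,y) * B $$ (i0,j0)"
    using c i xy by (simp add: kron_index)
  then show "A $$ (x,y) = C $$ (x,y)" using nz by simp
qed (use c in auto)




lemma mat_eq_vec: assumes "A \<in> carrier_mat a b" "B \<in> carrier_mat a b"
  "\<And>w. w \<in> carrier_vec b \<Longrightarrow> A *\<^sub>v w = B *\<^sub>v w"
  shows "A = (B :: complex mat)"
proof (rule eq_matI)
  fix i j assume ij: "i < dim_row B" "j < dim_col B"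
  have "A *\<^sub>v unit_vec b j = B *\<^sub>v unit_vec b j" using assms(3) by simp
  then have "(A *\<^sub>v unit_vec b j) $ i = (B *\<^sub>v unit_vec b j) $ i" by simp
  then show "A $$ (i,j) = B $$ (i,j)" using ij assms(1,2) by simp
qed (use assms in auto)

lemma pauli_group_carrier: "P \<in> pauli_group n \<Longrightarrow> P \<in> carrier_mat (2^n) (2^n)"
  unfolding pauli_group_def by auto

lemma pauli_group_form: "P \<in> pauli_group n \<Longrightarrow> \<exists>c p. P = c \<cdot>\<^sub>m ps n p \<and> c \<in> {1, -1, \<i>, -\<i>}"
  unfolding pauli_group_def by auto

locale code_ctx =
  fixes n k g :: nat and S :: "complex mat set" and V :: "complex mat"
  assumes code: "stabilizer_subsystem_code n k g S V"
begin

abbreviation "N \<equiv> (2::nat)^n"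
abbreviation "M \<equiv> (2::nat)^(k+g)"
abbreviation "PP \<equiv> code_proj V"

lemmas asNM = assoc_mult_mat[of _ N N _ N _ N] assoc_mult_mat[of _ N N _ N _ M] assoc_mult_mat[of _ N N _ M _ N] assoc_mult_mat[of _ N N _ M _ M] assoc_mult_mat[of _ N M _ N _ N] assoc_mult_mat[of _ N M _ N _ M] assoc_mult_mat[of _ N M _ M _ N] assoc_mult_mat[of _ N M _ M _ M] assoc_mult_mat[of _ M N _ N _ N] assoc_mult_mat[of _ M N _ N _ M] assoc_mult_mat[of _ M N _ M _ N] assoc_mult_mat[of _ M N _ M _ M] assoc_mult_mat[of _ M M _ N _ N] assoc_mult_mat[of _ M M _ N _ M] assoc_mult_mat[of _ M M _ M _ N] assoc_mult_mat[of _ M M _ M _ M]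
lemmas mcNM = mult_carrier_mat[of _ N N _ N] mult_carrier_mat[of _ N N _ M] mult_carrier_mat[of _ N M _ N] mult_carrier_mat[of _ N M _ M] mult_carrier_mat[of _ M N _ N] mult_carrier_mat[of _ M N _ M] mult_carrier_mat[of _ M M _ N] mult_carrier_mat[of _ M M _ M]

lemma stab: "stabilizer_group n S" using code unfolding stabilizer_subsystem_code_def by auto
lemma cV: "V \<in> carrier_mat N M" using code unfolding stabilizer_subsystem_code_def by auto
lemma VV: "mat_adjoint V * V = 1\<^sub>m M" using code unfolding stabilizer_subsystem_code_def by auto
lemma range: "{V *\<^sub>v w | w. w \<in> carrier_vec M} = code_space n S"
  using code unfolding stabilizer_subsystem_code_def by auto
lemma code_prop: "P \<in> pauli_group n \<Longrightarrow> P * PP = PP * P \<Longrightarrow>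
   (\<exists>PL\<in>pauli_group k. \<exists>PJ\<in>pauli_group g. mat_adjoint V * P * V = kron PL PJ)"
  using code unfolding stabilizer_subsystem_code_def by auto

lemma cS: "s \<in> S \<Longrightarrow> s \<in> carrier_mat N N"
  using stab pauli_group_carrier unfolding stabilizer_group_def by auto

lemma S_adj: "s \<in> S \<Longrightarrow> mat_adjoint s \<in> S"
  using stab unfolding stabilizer_group_def by auto

lemma cVa: "mat_adjoint V \<in> carrier_mat M N" using cV by simp
lemma cPi: "PP \<in> carrier_mat N N" unfolding code_proj_def using cV by simp

lemma in_code: "w \<in> carrier_vec M \<Longrightarrow> V *\<^sub>v w \<in> code_space n S"
  using range by blast

lemma sV: assumes "s \<in> S" shows "s * V = V"
proof (rule mat_eq_vec[of _ N M])
  show "s * V \<in> carrier_mat N M" using cS[OF assms] cV by simp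
  show "V \<in> carrier_mat N M" by (rule cV)
  fix w :: "complex vec" assume w: "w \<in> carrier_vec M"
  have "(s * V) *\<^sub>v w = s *\<^sub>v (V *\<^sub>v w)" using cS[OF assms] cV w by (rule assoc_mult_mat_vec)
  also have "\<dots> = V *\<^sub>v w" using in_code[OF w] assms unfolding code_space_def by auto
  finally show "(s * V) *\<^sub>v w = V *\<^sub>v w" .
qed

lemma Vs: assumes "s \<in> S" shows "mat_adjoint V * s = mat_adjoint V"
proof -
  have "mat_adjoint s * V = V" by (rule sV[OF S_adj[OF assms]])
  then have "mat_adjoint (mat_adjoint s * V) = mat_adjoint V" by simp
  then show ?thesis using cS[OF assms] cV by (simp add: adj_mult[of _ N N _ M])
qed

lemma PPV: "PP * V = V"
  unfolding code_proj_def using cV cVa VV by (simp add: asNM mcNM )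

lemma Pi_herm: "mat_adjoint PP = PP"
  unfolding code_proj_def using cV by (simp add: adj_mult[of _ N M _ N])

lemma normalizer:
  assumes cP: "P \<in> carrier_mat N N" and herm: "mat_adjoint P = P" and com: "\<forall>s\<in>S. s * P = P * s"
  shows "P * PP = PP * P"
proof -
  have PV: "PP * (P * V) = P * V"
  proof (rule mat_eq_vec[of _ N M])
    show "PP * (P * V) \<in> carrier_mat N M" using cPi cP cV by simp
    show "P * V \<in> carrier_mat N M" using cP cV by simp
    fix w :: "complex vec" assume w: "w \<in> carrier_vec M"
    have vin: "V *\<^sub>v w \<in> code_space n S" by (rule in_code[OF w])
    have "P *\<^sub>v (V *\<^sub>v w) \<in> code_space n S"
      unfolding code_space_def
    proof (intro CollectI conjI ballI)
      show "P *\<^sub>v (V *\<^sub>v w) \<in> carrier_vec N" using cP cV w by simp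
      fix s assume s: "s \<in> S"
      have cVw: "V *\<^sub>v w \<in> carrier_vec N" using cV w by simp
      have "s *\<^sub>v (P *\<^sub>v (V *\<^sub>v w)) = (s * P) *\<^sub>v (V *\<^sub>v w)"
        using assoc_mult_mat_vec[OF cS[OF s] cP cVw] by simp
      also have "\<dots> = (P * s) *\<^sub>v (V *\<^sub>v w)" using com s by simp
      also have "\<dots> = P *\<^sub>v (s *\<^sub>v (V *\<^sub>v w))"
        using assoc_mult_mat_vec[OF cP cS[OF s] cVw] by simp
      also have "\<dots> = P *\<^sub>v (V *\<^sub>v w)" using vin s unfolding code_space_def by auto
      finally show "s *\<^sub>v (P *\<^sub>v (V *\<^sub>v w)) = P *\<^sub>v (V *\<^sub>v w)" .
    qed
    then obtain w' where w': "w' \<in> carrier_vec M" "P *\<^sub>v (V *\<^sub>v w) = V *\<^sub>v w'" using range by blast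
    have cPV: "P * V \<in> carrier_mat N M" using cP cV by simp
    have "(PP * (P * V)) *\<^sub>v w = PP *\<^sub>v (P *\<^sub>v (V *\<^sub>v w))"
      using assoc_mult_mat_vec[OF cPi cPV w] assoc_mult_mat_vec[OF cP cV w] by simp
    also have "\<dots> = PP *\<^sub>v (V *\<^sub>v w')" using w' by simp
    also have "\<dots> = (PP * V) *\<^sub>v w'" using assoc_mult_mat_vec[OF cPi cV w'(1)] by simp
    also have "\<dots> = V *\<^sub>v w'" by (simp add: PPV)
    also have "\<dots> = (P * V) *\<^sub>v w" using w' assoc_mult_mat_vec[OF cP cV w] by simp
    finally show "(PP * (P * V)) *\<^sub>v w = (P * V) *\<^sub>v w" .
  qed
  have 1: "P * PP = PP * P * PP"
  proof -
    have "P * PP = (P * V) * mat_adjoint V" unfolding code_proj_def using cP cV by (simp add: asNM mcNM)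
    also have "\<dots> = (PP * (P * V)) * mat_adjoint V" by (simp add: PV)
    also have "\<dots> = PP * P * PP" unfolding code_proj_def using cP cV
      by (simp add: asNM mcNM )
    finally show ?thesis .
  qed
  have 2: "mat_adjoint (P * PP) = PP * P" using cP cPi by (simp add: adj_mult[of P N N PP N] Pi_herm herm)
  have 3: "mat_adjoint (PP * P * PP) = PP * P * PP" using cP cPi
    by (simp add: adj_mult[of _ N N _ N] Pi_herm herm asNM mcNM)
  have "PP * P = mat_adjoint (P * PP)" using 2 by simp
  also have "\<dots> = mat_adjoint (PP * P * PP)" using 1 by simp
  also have "\<dots> = P * PP" using 3 1 by simp
  finally show ?thesis by simp
qed

lemma sq1: "(x::complex) * x = 1 \<Longrightarrow> x = 1 \<or> x = -1" using square_eq_1_iff by blast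

lemma anticomm_zero:
  assumes nc: "\<not> (ps n p * PP = PP * ps n p)"
  shows "mat_adjoint V * ps n p * V = 0\<^sub>m M M"
proof -
  let ?P = "ps n p"
  obtain s where s: "s \<in> S" "s * ?P \<noteq> ?P * s"
    using normalizer[OF ps_carrier ps_adj] nc by blast
  obtain c t where ct: "s = c \<cdot>\<^sub>m ps n t"
    using s(1) stab pauli_group_form unfolding stabilizer_group_def by blast
  have cs: "s \<in> carrier_mat N N" using cS[OF s(1)] .
  have Ps: "?P * s = csgn n p t \<cdot>\<^sub>m (s * ?P)"
    unfolding ct using ps_comm[of n p t]
    by (simp add: mult_smult_distrib[OF ps_carrier ps_carrier] mult_smult_assoc_mat[OF ps_carrier ps_carrier]
        smult_smult_mat mult.commute)
  have "csgn n p t \<noteq> 1" using s(2) Ps by (auto simp: one_smult_mat')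
  then have m1: "csgn n p t = -1" using sq1[OF csgn_sq] by blast
  let ?X = "mat_adjoint V * ?P * V"
  have "?X = mat_adjoint V * ?P * (s * V)" by (simp add: sV[OF s(1)])
  also have "\<dots> = mat_adjoint V * (?P * s) * V" using cs cV
    by (simp add: asNM mcNM )
  also have "\<dots> = (-1) \<cdot>\<^sub>m (mat_adjoint V * (s * ?P) * V)"
  proof -
    have cQ: "s * ?P \<in> carrier_mat N N" using cs by simp
    have cQ2: "mat_adjoint V * (s * ?P) \<in> carrier_mat M N" using cQ cVa by simp
    show ?thesis unfolding Ps m1
      by (simp add: mult_smult_distrib[OF cVa cQ] mult_smult_assoc_mat[OF cQ2 cV])
  qed
  also have "mat_adjoint V * (s * ?P) * V = (mat_adjoint V * s) * ?P * V" using cs cV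
    by (simp add: asNM mcNM )
  also have "\<dots> = ?X" by (simp add: Vs[OF s(1)])
  finally have eq: "?X = (-1) \<cdot>\<^sub>m ?X" .
  show ?thesis
  proof (rule eq_matI)
    fix i j assume "i < dim_row (0\<^sub>m M M :: complex mat)" "j < dim_col (0\<^sub>m M M :: complex mat)"
    then have ij: "i < M" "j < M" by auto
    have "?X $$ (i,j) = ((-1) \<cdot>\<^sub>m ?X) $$ (i,j)" using eq by simp
    then have "?X $$ (i,j) = - ?X $$ (i,j)" using ij cV by simp
    then show "?X $$ (i,j) = 0\<^sub>m M M $$ (i,j)" using ij by simp
  qed (use cV in auto)
qed

lemma impl_mult:
  assumes cA: "A \<in> carrier_mat N N" and cB: "B \<in> carrier_mat N N" and comB: "B * PP = PP * B"
  shows "mat_adjoint V * (A * B) * V = (mat_adjoint V * A * V) * (mat_adjoint V * B * V)"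
proof -
  have BV: "B * V = V * (mat_adjoint V * B * V)"
  proof -
    have "B * V = B * (PP * V)" by (simp add: PPV)
    also have "\<dots> = (B * PP) * V" using cB cPi cV by simp
    also have "\<dots> = (PP * B) * V" by (simp add: comB)
    also have "\<dots> = V * (mat_adjoint V * B * V)" unfolding code_proj_def using cB cV
      by (simp add: asNM mcNM )
    finally show ?thesis .
  qed
  have "mat_adjoint V * (A * B) * V = mat_adjoint V * A * (B * V)" using cA cB cV
    by (simp add: asNM mcNM )
  also have "\<dots> = mat_adjoint V * A * (V * (mat_adjoint V * B * V))" by (simp add: BV)
  also have "\<dots> = (mat_adjoint V * A * V) * (mat_adjoint V * B * V)" using cA cB cV
    by (simp add: asNM mcNM )
  finally show ?thesis .
qed

lemma impl_adj: assumes cA: "A \<in> carrier_mat N N"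
  shows "mat_adjoint (mat_adjoint V * A * V) = mat_adjoint V * mat_adjoint A * V"
proof -
  have c1: "mat_adjoint V * A \<in> carrier_mat M N" using cA cVa by simp
  have "mat_adjoint (mat_adjoint V * A * V) = mat_adjoint V * mat_adjoint (mat_adjoint V * A)"
    by (rule adj_mult[OF c1 cV])
  also have "\<dots> = mat_adjoint V * (mat_adjoint A * V)" by (simp add: adj_mult[OF cVa cA])
  also have "\<dots> = mat_adjoint V * mat_adjoint A * V" using cA cV by (simp add: asNM mcNM)
  finally show ?thesis .
qed

end




definition frob :: "nat \<Rightarrow> complex mat \<Rightarrow> complex mat \<Rightarrow> complex" where
  "frob D B X = (\<Sum>i<D. \<Sum>j<D. cnj (B $$ (i,j)) * X $$ (i,j))"

lemma swap3: "(\<Sum>x\<in>X. \<Sum>y\<in>Y. \<Sum>g\<in>G. f x y g) = (\<Sum>g\<in>G. \<Sum>x\<in>X. \<Sum>y\<in>Y. (f x y g :: complex))"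
proof -
  have "(\<Sum>x\<in>X. \<Sum>y\<in>Y. \<Sum>g\<in>G. f x y g) = (\<Sum>x\<in>X. \<Sum>g\<in>G. \<Sum>y\<in>Y. f x y g)"
    by (rule sum.cong[OF refl]) (rule sum.swap)
  also have "\<dots> = (\<Sum>g\<in>G. \<Sum>x\<in>X. \<Sum>y\<in>Y. f x y g)" by (rule sum.swap)
  finally show ?thesis .
qed

lemma swap4: "(\<Sum>i\<in>I. \<Sum>j\<in>J. \<Sum>y\<in>Y. \<Sum>x\<in>X. f i j y x) = (\<Sum>x\<in>X. \<Sum>y\<in>Y. \<Sum>i\<in>I. \<Sum>j\<in>J. (f i j y x :: complex))"
proof -
  have "(\<Sum>i\<in>I. \<Sum>j\<in>J. \<Sum>y\<in>Y. \<Sum>x\<in>X. f i j y x) = (\<Sum>i\<in>I. \<Sum>j\<in>J. \<Sum>x\<in>X. \<Sum>y\<in>Y. f i j y x)"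
    by (rule sum.cong[OF refl], rule sum.cong[OF refl]) (rule sum.swap)
  also have "\<dots> = (\<Sum>i\<in>I. \<Sum>x\<in>X. \<Sum>j\<in>J. \<Sum>y\<in>Y. f i j y x)"
    by (rule sum.cong[OF refl]) (rule sum.swap)
  also have "\<dots> = (\<Sum>x\<in>X. \<Sum>i\<in>I. \<Sum>j\<in>J. \<Sum>y\<in>Y. f i j y x)" by (rule sum.swap)
  also have "\<dots> = (\<Sum>x\<in>X. \<Sum>i\<in>I. \<Sum>y\<in>Y. \<Sum>j\<in>J. f i j y x)"
    by (rule sum.cong[OF refl], rule sum.cong[OF refl]) (rule sum.swap)
  also have "\<dots> = (\<Sum>x\<in>X. \<Sum>y\<in>Y. \<Sum>i\<in>I. \<Sum>j\<in>J. f i j y x)"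
    by (rule sum.cong[OF refl]) (rule sum.swap)
  finally show ?thesis .
qed

lemma sum_prod_bits2:
  fixes H :: "nat \<Rightarrow> bool \<Rightarrow> bool \<Rightarrow> complex"
  shows "(\<Sum>x<2^m. \<Sum>y<2^m. \<Prod>q<m. H q (qbit x q) (qbit y q)) =
    (\<Prod>q<m. H q False False + H q False True + (H q True False + H q True True))"
proof -
  have "(\<Sum>x<2^m. \<Sum>y<2^m. \<Prod>q<m. H q (qbit x q) (qbit y q)) =
        (\<Sum>x<2^m. \<Prod>q<m. H q (qbit x q) False + H q (qbit x q) True)"
    by (rule sum.cong[OF refl]) (rule sum_prod_bits[where F = "\<lambda>q b. H q (qbit _ q) b"])
  also have "\<dots> = (\<Prod>q<m. H q False False + H q False True + (H q True False + H q True True))"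
    by (rule sum_prod_bits[where F = "\<lambda>q b. H q b False + H q b True"])
  finally show ?thesis .
qed

lemma frob_ps: "frob (2^m) (ps m a) (ps m a') = (\<Prod>q<m. if a q = a' q then 2 else 0)"
proof -
  have "frob (2^m) (ps m a) (ps m a') =
     (\<Sum>x<2^m. \<Sum>y<2^m. \<Prod>q<m. cnj (e1 (a q) (qbit x q) (qbit y q)) * e1 (a' q) (qbit x q) (qbit y q))"
    unfolding frob_def by (auto simp: ps_index prod.distrib intro!: sum.cong)
  also have "\<dots> = (\<Prod>q<m. if a q = a' q then 2 else 0)"
    by (subst sum_prod_bits2) (simp add: e1_orth')
  finally show ?thesis .
qed

lemma frob_ps_self: "frob (2^m) (ps m a) (ps m a) = 2^m"
  by (simp add: frob_ps)

lemma frob_ps_diff: "q < m \<Longrightarrow> a q \<noteq> a' q \<Longrightarrow> frob (2^m) (ps m a) (ps m a') = 0"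
  unfolding frob_ps by (rule prod_zero) (auto intro!: bexI[of _ q])

lemma frob_kron:
  assumes c: "A \<in> carrier_mat K K" "A' \<in> carrier_mat K K" "C \<in> carrier_mat G G" "C' \<in> carrier_mat G G"
  shows "frob (K*G) (kron A C) (kron A' C') = frob K A A' * frob G C C'"
proof -
  let ?a = "\<lambda>i1 j1. cnj (A $$ (i1,j1)) * A' $$ (i1,j1)"
  let ?c = "\<lambda>i2 j2. cnj (C $$ (i2,j2)) * C' $$ (i2,j2)"
  have "frob (K*G) (kron A C) (kron A' C') =
     (\<Sum>i<K*G. \<Sum>j<K*G. ?a (i mod K) (j mod K) * ?c (i div K) (j div K))"
    unfolding frob_def using c by (intro sum.cong refl) (auto simp: kron_index)
  also have "\<dots> = (\<Sum>i<K*G. (\<lambda>i1 i2. \<Sum>j2<G. \<Sum>j1<K. ?a i1 j1 * ?c i2 j2) (i mod K) (i div K))"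
    by (rule sum.cong[OF refl]) (rule sum_mod_div[where f = "\<lambda>j1 j2. ?a (_ mod K) j1 * ?c (_ div K) j2"])
  also have "\<dots> = (\<Sum>i2<G. \<Sum>i1<K. \<Sum>j2<G. \<Sum>j1<K. ?a i1 j1 * ?c i2 j2)"
    by (rule sum_mod_div)
  also have "\<dots> = (\<Sum>i2<G. \<Sum>i1<K. (\<Sum>j1<K. ?a i1 j1) * (\<Sum>j2<G. ?c i2 j2))"
    by (rule sum.cong[OF refl], rule sum.cong[OF refl]) (simp add: sum_product sum.swap[of _ "{..<G}" "{..<K}"])
  also have "\<dots> = (\<Sum>i1<K. \<Sum>i2<G. (\<Sum>j1<K. ?a i1 j1) * (\<Sum>j2<G. ?c i2 j2))"
    by (rule sum.swap)
  also have "\<dots> = (\<Sum>i1<K. \<Sum>j1<K. ?a i1 j1) * (\<Sum>i2<G. \<Sum>j2<G. ?c i2 j2)"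
    by (rule sum_product[symmetric])
  finally show ?thesis unfolding frob_def .
qed

lemma frob_smult: "X \<in> carrier_mat D D \<Longrightarrow> frob D B (c \<cdot>\<^sub>m X) = c * frob D B X"
  unfolding frob_def by (simp add: sum_distrib_left mult_ac)

lemma frob_zero: "frob D B (0\<^sub>m D D) = 0"
  unfolding frob_def by simp

lemma frob_lin:
  assumes cB: "B \<in> carrier_mat Mm Mm" and cV: "V \<in> carrier_mat Nn Mm" and cX: "X \<in> carrier_mat Nn Nn"
  shows "frob Mm B (mat_adjoint V * X * V) =
    (\<Sum>x<Nn. \<Sum>y<Nn. X $$ (x,y) * (\<Sum>i<Mm. \<Sum>j<Mm. cnj (B $$ (i,j)) * (cnj (V $$ (x,i)) * V $$ (y,j))))"
proof -
  have cVa: "mat_adjoint V \<in> carrier_mat Mm Nn" using cV by simp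
  have cVX: "mat_adjoint V * X \<in> carrier_mat Mm Nn" using cVa cX by simp
  have e: "(mat_adjoint V * X * V) $$ (i,j) = (\<Sum>y<Nn. (\<Sum>x<Nn. cnj (V $$ (x,i)) * X $$ (x,y)) * V $$ (y,j))"
    if "i < Mm" "j < Mm" for i j
  proof -
    have "(mat_adjoint V * X * V) $$ (i,j) = (\<Sum>y<Nn. (mat_adjoint V * X) $$ (i,y) * V $$ (y,j))"
      by (rule mult_index_sum[OF cVX cV that])
    also have "\<dots> = (\<Sum>y<Nn. (\<Sum>x<Nn. cnj (V $$ (x,i)) * X $$ (x,y)) * V $$ (y,j))"
    proof (rule sum.cong[OF refl])
      fix y assume y: "y \<in> {..<Nn}"
      have "(mat_adjoint V * X) $$ (i,y) = (\<Sum>x<Nn. mat_adjoint V $$ (i,x) * X $$ (x,y))"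
        by (rule mult_index_sum[OF cVa cX that(1)]) (use y in auto)
      also have "\<dots> = (\<Sum>x<Nn. cnj (V $$ (x,i)) * X $$ (x,y))"
        using cV that by (intro sum.cong refl) auto
      finally show "(mat_adjoint V * X) $$ (i,y) * V $$ (y,j) = (\<Sum>x<Nn. cnj (V $$ (x,i)) * X $$ (x,y)) * V $$ (y,j)"
        by simp
    qed
    finally show ?thesis .
  qed
  have "frob Mm B (mat_adjoint V * X * V) =
     (\<Sum>i<Mm. \<Sum>j<Mm. \<Sum>y<Nn. \<Sum>x<Nn. cnj (B $$ (i,j)) * (cnj (V $$ (x,i)) * X $$ (x,y) * V $$ (y,j)))"
    unfolding frob_def by (intro sum.cong refl) (simp add: e sum_distrib_left sum_distrib_right mult_ac)
  also have "\<dots> = (\<Sum>x<Nn. \<Sum>y<Nn. \<Sum>i<Mm. \<Sum>j<Mm. cnj (B $$ (i,j)) * (cnj (V $$ (x,i)) * X $$ (x,y) * V $$ (y,j)))"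
    by (rule swap4)
  also have "\<dots> = (\<Sum>x<Nn. \<Sum>y<Nn. X $$ (x,y) * (\<Sum>i<Mm. \<Sum>j<Mm. cnj (B $$ (i,j)) * (cnj (V $$ (x,i)) * V $$ (y,j))))"
    by (simp add: sum_distrib_left mult_ac)
  finally show ?thesis .
qed


definition Bs :: "nat set \<Rightarrow> nat \<Rightarrow> pauli1 set" where
  "Bs C q = (if q \<in> C then UNIV else {PI})"

definition alpha :: "nat \<Rightarrow> complex mat \<Rightarrow> (nat \<Rightarrow> pauli1) \<Rightarrow> complex" where
  "alpha n A g = (1 / 2^n) * (\<Sum>x'<2^n. \<Sum>y'<2^n. cnj (ps n g $$ (x',y')) * A $$ (x',y'))"

lemma finite_pauli1: "finite (UNIV :: pauli1 set)" by (simp add: UNIV_pauli1)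

lemma finite_Bs: "finite (Bs C q)" by (simp add: Bs_def finite_pauli1)

lemma PiE_Bs: "g \<in> PiE {..<n} (Bs C) \<Longrightarrow> q < n \<Longrightarrow> q \<notin> C \<Longrightarrow> g q = PI"
  by (auto simp: PiE_def Pi_def Bs_def)

lemma decomp:
  assumes A: "supported_on n C A" and xy: "x < 2^n" "y < 2^n"
  shows "A $$ (x,y) = (\<Sum>g\<in>PiE {..<n} (Bs C). alpha n A g * ps n g $$ (x,y))"
proof -
  define H where "H q b b' = (if q \<in> C then (if b = qbit x q \<and> b' = qbit y q then 2 else 0)
      else (if b = b' \<and> qbit x q = qbit y q then 1 else 0 :: complex))" for q b b'
  let ?G = "PiE {..<n} (Bs C)"
  have st1: "(\<Sum>g\<in>?G. cnj (ps n g $$ (x',y')) * ps n g $$ (x,y)) = (\<Prod>q<n. H q (qbit x' q) (qbit y' q))"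
    if x'y': "x' < 2^n" "y' < 2^n" for x' y'
  proof -
    have "(\<Sum>g\<in>?G. cnj (ps n g $$ (x',y')) * ps n g $$ (x,y)) =
        (\<Sum>g\<in>?G. \<Prod>q<n. cnj (e1 (g q) (qbit x' q) (qbit y' q)) * e1 (g q) (qbit x q) (qbit y q))"
      using xy x'y' by (simp add: ps_index prod.distrib)
    also have "\<dots> = (\<Prod>q<n. \<Sum>s\<in>Bs C q. cnj (e1 s (qbit x' q) (qbit y' q)) * e1 s (qbit x q) (qbit y q))"
      by (rule prod_sum_PiE[symmetric]) (auto simp: finite_Bs)
    also have "\<dots> = (\<Prod>q<n. H q (qbit x' q) (qbit y' q))"
    proof (rule prod.cong[OF refl])
      fix q assume "q \<in> {..<n}"
      show "(\<Sum>s\<in>Bs C q. cnj (e1 s (qbit x' q) (qbit y' q)) * e1 s (qbit x q) (qbit y q)) = H q (qbit x' q) (qbit y' q)"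
      proof (cases "q \<in> C")
        case True
        then show ?thesis unfolding Bs_def H_def by (simp add: e1_compl)
      next
        case False
        then show ?thesis unfolding Bs_def H_def by auto
      qed
    qed
    finally show ?thesis .
  qed
  have "(\<Sum>g\<in>?G. alpha n A g * ps n g $$ (x,y)) =
     (\<Sum>g\<in>?G. \<Sum>x'<2^n. \<Sum>y'<2^n. (1 / 2^n) * (A $$ (x',y') * (cnj (ps n g $$ (x',y')) * ps n g $$ (x,y))))"
    unfolding alpha_def by (simp add: sum_distrib_left sum_distrib_right mult_ac)
  also have "\<dots> = (\<Sum>x'<2^n. \<Sum>y'<2^n. \<Sum>g\<in>?G. (1 / 2^n) * (A $$ (x',y') * (cnj (ps n g $$ (x',y')) * ps n g $$ (x,y))))"
    by (rule swap3[symmetric])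
  also have "\<dots> = (\<Sum>x'<2^n. \<Sum>y'<2^n. (1 / 2^n) * (A $$ (x',y') * (\<Prod>q<n. H q (qbit x' q) (qbit y' q))))"
  proof (intro sum.cong refl)
    fix x' y' assume "x' \<in> {..<(2::nat)^n}" "y' \<in> {..<(2::nat)^n}"
    then have x'y': "x' < 2^n" "y' < 2^n" by auto
    show "(\<Sum>g\<in>?G. (1 / 2^n) * (A $$ (x',y') * (cnj (ps n g $$ (x',y')) * ps n g $$ (x,y)))) =
       (1 / 2^n) * (A $$ (x',y') * (\<Prod>q<n. H q (qbit x' q) (qbit y' q)))"
      by (simp only: sum_distrib_left[symmetric] st1[OF x'y'])
  qed
  also have "\<dots> = (\<Sum>x'<2^n. \<Sum>y'<2^n. (1 / 2^n) * (A $$ (x,y) * (\<Prod>q<n. H q (qbit x' q) (qbit y' q))))"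
  proof (intro sum.cong refl)
    fix x' y' assume "x' \<in> {..<(2::nat)^n}" "y' \<in> {..<(2::nat)^n}"
    then have x'y': "x' < 2^n" "y' < 2^n" by auto
    show "(1 / 2^n) * (A $$ (x',y') * (\<Prod>q<n. H q (qbit x' q) (qbit y' q))) =
          (1 / 2^n) * (A $$ (x,y) * (\<Prod>q<n. H q (qbit x' q) (qbit y' q)))"
    proof (cases "(\<Prod>q<n. H q (qbit x' q) (qbit y' q)) = 0")
      case True then show ?thesis by simp
    next
      case False
      then have nz: "\<forall>q<n. H q (qbit x' q) (qbit y' q) \<noteq> 0" by auto
      have "same n C x' x" "same n C y' y" "agr n C x y" "agr n C x' y'"
        using nz unfolding same_def agr_def H_def by (auto split: if_splits)
      then have "A $$ (x',y') = A $$ (x,y)"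
        using supp_val[OF A x'y' xy] by simp
      then show ?thesis by simp
    qed
  qed
  also have "\<dots> = (1 / 2^n) * A $$ (x,y) * (\<Sum>x'<2^n. \<Sum>y'<2^n. \<Prod>q<n. H q (qbit x' q) (qbit y' q))"
    by (simp add: sum_distrib_left mult_ac)
  also have "\<dots> = (1 / 2^n) * A $$ (x,y) * (\<Prod>q<n. H q False False + H q False True + (H q True False + H q True True))"
    by (simp add: sum_prod_bits2)
  also have "\<dots> = A $$ (x,y)"
  proof (cases "agr n C x y")
    case True
    have "(\<Prod>q<n. H q False False + H q False True + (H q True False + H q True True)) = (\<Prod>q<n. 2)"
      using True by (intro prod.cong refl) (auto simp: H_def agr_def)
    then show ?thesis by simp
  next
    case False
    then have "A $$ (x,y) = 0" using supp_zero[OF A xy] by simp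
    then show ?thesis by simp
  qed
  finally show ?thesis by simp
qed




lemma ps_cong: "(\<And>q. q < m \<Longrightarrow> a q = a' q) \<Longrightarrow> ps m a = ps m a'"
  unfolding pauli_string_def by (intro cong_mat refl) (auto intro!: prod.cong)

lemma ps_in_group: "ps n p \<in> pauli_group n"
  unfolding pauli_group_def by (rule CollectI, rule exI[of _ 1], rule exI[of _ p]) (simp add: one_smult_mat')

context code_ctx begin

lemma Mpow: "M = 2^k * 2^g" by (simp add: power_add)

lemma pauli_extract:
  assumes A: "supported_on n C A"
    and impl: "mat_adjoint V * A * V = kron (ps k a) PJ" and PJ: "PJ \<in> pauli_group g"
  shows "\<exists>p d b. (\<forall>q<n. q \<notin> C \<longrightarrow> p q = PI) \<and> ps n p * PP = PP * ps n p \<and>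
            mat_adjoint V * ps n p * V = d \<cdot>\<^sub>m kron (ps k a) (ps g b)"
proof (rule ccontr)
  assume neg: "\<not> (\<exists>p d b. (\<forall>q<n. q \<notin> C \<longrightarrow> p q = PI) \<and> ps n p * PP = PP * ps n p \<and>
            mat_adjoint V * ps n p * V = d \<cdot>\<^sub>m kron (ps k a) (ps g b))"
  obtain c0 b0 where PJe: "PJ = c0 \<cdot>\<^sub>m ps g b0" "c0 \<in> {1,-1,\<i>,-\<i>}" using pauli_group_form[OF PJ] by blast
  let ?B = "kron (ps k a) (ps g b0)"
  have cB: "?B \<in> carrier_mat M M" unfolding Mpow by (rule kron_carrier) auto
  have cA: "A \<in> carrier_mat N N" using A supp_carrier by auto
  define Om where "Om x y = (\<Sum>i<M. \<Sum>j<M. cnj (?B $$ (i,j)) * (cnj (V $$ (x,i)) * V $$ (y,j)))" for x y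
  have lin: "frob M ?B (mat_adjoint V * X * V) = (\<Sum>x<N. \<Sum>y<N. X $$ (x,y) * Om x y)"
    if "X \<in> carrier_mat N N" for X
    unfolding Om_def by (rule frob_lin[OF cB cV that])
  have fk: "frob M ?B (kron (ps k a') (ps g b')) = frob (2^k) (ps k a) (ps k a') * frob (2^g) (ps g b0) (ps g b')"
    for a' b' unfolding Mpow by (rule frob_kron) auto
  have zero: "frob M ?B (mat_adjoint V * ps n g' * V) = 0" if g': "g' \<in> PiE {..<n} (Bs C)" for g'
  proof (cases "ps n g' * PP = PP * ps n g'")
    case True
    obtain PL PJ' where PLJ: "PL \<in> pauli_group k" "PJ' \<in> pauli_group g"
        "mat_adjoint V * ps n g' * V = kron PL PJ'"
      using code_prop[OF ps_in_group True] by blast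
    obtain c1 a' where c1: "PL = c1 \<cdot>\<^sub>m ps k a'" using pauli_group_form[OF PLJ(1)] by blast
    obtain c2 b' where c2: "PJ' = c2 \<cdot>\<^sub>m ps g b'" using pauli_group_form[OF PLJ(2)] by blast
    have eq: "mat_adjoint V * ps n g' * V = (c1 * c2) \<cdot>\<^sub>m kron (ps k a') (ps g b')"
      unfolding PLJ(3) c1 c2 by (simp add: kron_smult_l kron_smult_r smult_smult_mat mult.commute)
    have "\<exists>q<k. a' q \<noteq> a q"
    proof (rule ccontr)
      assume "\<not> (\<exists>q<k. a' q \<noteq> a q)"
      then have "ps k a' = ps k a" by (intro ps_cong) auto
      then have "mat_adjoint V * ps n g' * V = (c1 * c2) \<cdot>\<^sub>m kron (ps k a) (ps g b')" using eq by simp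
      moreover have "\<forall>q<n. q \<notin> C \<longrightarrow> g' q = PI" using PiE_Bs[OF g'] by blast
      ultimately show False using neg True by blast
    qed
    then obtain q where q: "q < k" "a' q \<noteq> a q" by blast
    have ck: "kron (ps k a') (ps g b') \<in> carrier_mat M M" unfolding Mpow by (rule kron_carrier) auto
    have "frob M ?B (mat_adjoint V * ps n g' * V) = (c1 * c2) * frob M ?B (kron (ps k a') (ps g b'))"
      unfolding eq by (rule frob_smult[OF ck])
    also have "\<dots> = 0" unfolding fk using frob_ps_diff[of q k a a'] q by simp
    finally show ?thesis .
  next
    case False
    then show ?thesis using anticomm_zero frob_zero by simp
  qed
  let ?G = "PiE {..<n} (Bs C)"
  have "frob M ?B (mat_adjoint V * A * V) = (\<Sum>x<N. \<Sum>y<N. A $$ (x,y) * Om x y)" by (rule lin[OF cA])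
  also have "\<dots> = (\<Sum>x<N. \<Sum>y<N. \<Sum>g'\<in>?G. alpha n A g' * (ps n g' $$ (x,y) * Om x y))"
    by (intro sum.cong refl) (simp add: decomp[OF A] sum_distrib_right sum_distrib_left mult_ac)
  also have "\<dots> = (\<Sum>g'\<in>?G. \<Sum>x<N. \<Sum>y<N. alpha n A g' * (ps n g' $$ (x,y) * Om x y))"
    by (rule swap3)
  also have "\<dots> = (\<Sum>g'\<in>?G. alpha n A g' * frob M ?B (mat_adjoint V * ps n g' * V))"
    by (intro sum.cong refl) (simp add: lin[OF ps_carrier] sum_distrib_left)
  also have "\<dots> = 0" using zero by simp
  finally have f0: "frob M ?B (mat_adjoint V * A * V) = 0" .
  have "mat_adjoint V * A * V = c0 \<cdot>\<^sub>m ?B" unfolding impl PJe by (simp add: kron_smult_r)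
  then have "frob M ?B (mat_adjoint V * A * V) = c0 * frob M ?B ?B" using frob_smult[OF cB] by simp
  also have "\<dots> = c0 * (2^k * 2^g)" unfolding fk by (simp add: frob_ps_self)
  finally have "c0 * (2^k * 2^g) = 0" using f0 by simp
  moreover have "c0 \<noteq> 0" using PJe(2) by auto
  ultimately show False by simp
qed

end




lemma clifford_carrier: assumes "X \<in> clifford k i" shows "X \<in> carrier_mat (2^k) (2^k)"
proof (cases i)
  case 0 then show ?thesis using assms by auto
next
  case (Suc i') then show ?thesis using assms by (cases i') (auto simp: pauli_group_def)
qed

lemma cliff_smult: "X \<in> clifford k i \<Longrightarrow> c \<cdot>\<^sub>m X \<in> clifford k i"
proof (induction k i arbitrary: X c rule: clifford.induct)
  case (1 k)
  then obtain c' where "X = c' \<cdot>\<^sub>m 1\<^sub>m (2^k)" by auto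
  then show ?case by (auto simp: smult_smult_mat)
next
  case (2 k)
  then obtain c' P where "X = c' \<cdot>\<^sub>m P" "P \<in> pauli_group k" by auto
  then show ?case by (auto simp: smult_smult_mat)
next
  case (3 k j)
  have cX: "X \<in> carrier_mat (2^k) (2^k)" using "3.prems" by simp
  have "c \<cdot>\<^sub>m X * P * mat_adjoint (c \<cdot>\<^sub>m X) * mat_adjoint P \<in> clifford k (Suc j)"
    if P: "P \<in> clifford k (Suc 0)" for P
  proof -
    have cP: "P \<in> carrier_mat (2^k) (2^k)" using clifford_carrier[OF P] .
    have "X * P * mat_adjoint X * mat_adjoint P \<in> clifford k (Suc j)" using "3.prems" P by auto
    then have "(c * cnj c) \<cdot>\<^sub>m (X * P * mat_adjoint X * mat_adjoint P) \<in> clifford k (Suc j)"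
      using "3.IH"[of P] P by auto
    moreover have "c \<cdot>\<^sub>m X * P * mat_adjoint (c \<cdot>\<^sub>m X) * mat_adjoint P =
        (c * cnj c) \<cdot>\<^sub>m (X * P * mat_adjoint X * mat_adjoint P)"
    proof -
      have cXa: "mat_adjoint X \<in> carrier_mat (2^k) (2^k)" and cPa: "mat_adjoint P \<in> carrier_mat (2^k) (2^k)"
        using cX cP by auto
      have cXP: "X * P \<in> carrier_mat (2^k) (2^k)" using cX cP by simp
      have cXPX: "X * P * mat_adjoint X \<in> carrier_mat (2^k) (2^k)" using cXP cXa by simp
      have "c \<cdot>\<^sub>m X * P = c \<cdot>\<^sub>m (X * P)" by (rule mult_smult_assoc_mat[OF cX cP])
      moreover have "c \<cdot>\<^sub>m (X * P) * (cnj c \<cdot>\<^sub>m mat_adjoint X) = (c * cnj c) \<cdot>\<^sub>m (X * P * mat_adjoint X)"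
        by (simp add: mult_smult_distrib[OF smult_carrier_mat[OF cXP] cXa] mult_smult_assoc_mat[OF cXP cXa]
            smult_smult_mat mult.commute)
      moreover have "(c * cnj c) \<cdot>\<^sub>m (X * P * mat_adjoint X) * mat_adjoint P =
           (c * cnj c) \<cdot>\<^sub>m (X * P * mat_adjoint X * mat_adjoint P)"
        by (rule mult_smult_assoc_mat[OF cXPX cPa])
      ultimately show ?thesis by (simp add: adj_smult)
    qed
    ultimately show ?thesis by simp
  qed
  then show ?case using cX by simp
qed

lemma nz_entry: assumes "A \<in> carrier_mat D D" "B \<in> carrier_mat D D" "A * B = 1\<^sub>m D" "0 < D"
  shows "\<exists>i<D. \<exists>j<D. A $$ (i,j) \<noteq> (0::complex)"
proof (rule ccontr)
  assume h: "\<not> ?thesis"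
  have "(A * B) $$ (0,0) = (\<Sum>z<D. A $$ (0,z) * B $$ (z,0))"
    by (rule mult_index_sum[OF assms(1,2)]) (use assms in auto)
  also have "\<dots> = 0" using h assms(4) by auto
  finally have "(A * B) $$ (0,0) = 0" .
  then show False using assms by simp
qed

lemma ps_nz: "\<exists>i<2^m. \<exists>j<2^m. ps m b $$ (i,j) \<noteq> 0"
  by (rule nz_entry[OF ps_carrier ps_carrier ps_sq]) simp

lemma csgn_single: "q < k \<Longrightarrow> csgn k p (\<lambda>i. if i = q then s else PI) = sgn1 (p q) s"
  unfolding csgn_def by (subst prod_single_out[of q]) (auto simp: sgn1_def intro!: prod.neutral)

lemma ps_ps: "W \<in> carrier_mat (2^n) N' \<Longrightarrow> ps n p * (ps n p * W) = W"
  by (metis assoc_mult_mat left_mult_one_mat ps_carrier ps_sq)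

context code_ctx begin

lemma pPP: "P * PP = PP * P \<Longrightarrow> P \<in> carrier_mat N N \<Longrightarrow> mat_adjoint P * PP = PP * mat_adjoint P"
  by (metis Pi_herm adj_mult cPi)

lemma VtV: "mat_adjoint V * 1\<^sub>m N * V = 1\<^sub>m M" using cV VV by simp

lemma kron_I: "kron (1\<^sub>m (2^k)) (1\<^sub>m (2^g)) = 1\<^sub>m M"
  by (simp add: kron_one power_add)

lemma UL_unitary:
  assumes cU: "U \<in> carrier_mat N N" and u1: "U * mat_adjoint U = 1\<^sub>m N" and u2: "mat_adjoint U * U = 1\<^sub>m N"
    and com: "U * PP = PP * U" and imp: "mat_adjoint V * U * V = kron UL (1\<^sub>m (2^g))"
    and cUL: "UL \<in> carrier_mat (2^k) (2^k)"
  shows "UL * mat_adjoint UL = 1\<^sub>m (2^k)" "mat_adjoint UL * UL = 1\<^sub>m (2^k)"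
proof -
  have cUa: "mat_adjoint U \<in> carrier_mat N N" using cU by simp
  have comA: "mat_adjoint U * PP = PP * mat_adjoint U" by (rule pPP[OF com cU])
  have impA: "mat_adjoint V * mat_adjoint U * V = kron (mat_adjoint UL) (1\<^sub>m (2^g))"
    using impl_adj[OF cU] imp by (simp add: kron_adj)
  have "1\<^sub>m M = mat_adjoint V * (U * mat_adjoint U) * V" using u1 VtV by simp
  also have "\<dots> = kron UL (1\<^sub>m (2^g)) * kron (mat_adjoint UL) (1\<^sub>m (2^g))"
    using impl_mult[OF cU cUa comA] imp impA by simp
  also have "\<dots> = kron (UL * mat_adjoint UL) (1\<^sub>m (2^g))"
    using cUL by (simp add: kron_mult[of _ "2^k" _ _ "2^g"])
  finally have 1: "kron (UL * mat_adjoint UL) (1\<^sub>m (2^g)) = kron (1\<^sub>m (2^k)) (1\<^sub>m (2^g))"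
    using kron_I by simp
  show "UL * mat_adjoint UL = 1\<^sub>m (2^k)"
    by (rule kron_cancel[OF _ _ _ _ _ _ 1, of "2^k" "2^g" 0 0]) (use cUL in auto)
  have "1\<^sub>m M = mat_adjoint V * (mat_adjoint U * U) * V" using u2 VtV by simp
  also have "\<dots> = kron (mat_adjoint UL) (1\<^sub>m (2^g)) * kron UL (1\<^sub>m (2^g))"
    using impl_mult[OF cUa cU com] imp impA by simp
  also have "\<dots> = kron (mat_adjoint UL * UL) (1\<^sub>m (2^g))"
    using cUL by (simp add: kron_mult[of _ "2^k" _ _ "2^g"])
  finally have 2: "kron (mat_adjoint UL * UL) (1\<^sub>m (2^g)) = kron (1\<^sub>m (2^k)) (1\<^sub>m (2^g))"
    using kron_I by simp
  show "mat_adjoint UL * UL = 1\<^sub>m (2^k)"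
    by (rule kron_cancel[OF _ _ _ _ _ _ 2, of "2^k" "2^g" 0 0]) (use cUL in auto)
qed

lemma PJ_nz: "PJ \<in> pauli_group g \<Longrightarrow> \<exists>i<2^g. \<exists>j<2^g. PJ $$ (i,j) \<noteq> 0"
proof -
  assume "PJ \<in> pauli_group g"
  then obtain c b where cb: "PJ = c \<cdot>\<^sub>m ps g b" "c \<in> {1,-1,\<i>,-\<i>}" using pauli_group_form by blast
  obtain i j where ij: "i < 2^g" "j < 2^g" "ps g b $$ (i,j) \<noteq> 0" using ps_nz by blast
  then show ?thesis using cb by (intro exI[of _ i] exI[of _ j]) auto
qed

lemma commute_logical:
  assumes cU: "U \<in> carrier_mat N N" and com: "U * PP = PP * U"
    and imp: "mat_adjoint V * U * V = kron UL (1\<^sub>m (2^g))" and cUL: "UL \<in> carrier_mat (2^k) (2^k)"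
    and cA: "A \<in> carrier_mat N N" and comA: "A * PP = PP * A"
    and impA: "mat_adjoint V * A * V = kron PL PJ" and cPL: "PL \<in> carrier_mat (2^k) (2^k)"
    and PJ: "PJ \<in> pauli_group g" and UA: "U * A = A * U"
  shows "UL * PL = PL * UL"
proof -
  have cPJ: "PJ \<in> carrier_mat (2^g) (2^g)" using pauli_group_carrier[OF PJ] .
  have "kron (UL * PL) PJ = kron UL (1\<^sub>m (2^g)) * kron PL PJ"
    using cUL cPL cPJ by (simp add: kron_mult[of _ "2^k" _ _ "2^g"])
  also have "\<dots> = mat_adjoint V * (U * A) * V" using impl_mult[OF cU cA comA] imp impA by simp
  also have "\<dots> = mat_adjoint V * (A * U) * V" by (simp add: UA)
  also have "\<dots> = kron PL PJ * kron UL (1\<^sub>m (2^g))" using impl_mult[OF cA cU com] imp impA by simp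
  also have "\<dots> = kron (PL * UL) PJ"
    using cUL cPL cPJ by (simp add: kron_mult[of _ "2^k" _ _ "2^g"])
  finally have e: "kron (UL * PL) PJ = kron (PL * UL) PJ" .
  obtain i j where ij: "i < 2^g" "j < 2^g" "PJ $$ (i,j) \<noteq> 0" using PJ_nz[OF PJ] by blast
  show ?thesis by (rule kron_cancel[OF _ _ cPJ ij(3,1,2) e]) (use cUL cPL in auto)
qed

lemma Zq_group: "Zq k q \<in> pauli_group k" unfolding Zq_def by (rule ps_in_group)
lemma Xq_group: "Xq k q \<in> pauli_group k" unfolding Xq_def by (rule ps_in_group)

lemma base_case:
  assumes cU: "U \<in> carrier_mat N N" and com: "U * PP = PP * U"
    and imp: "mat_adjoint V * U * V = kron UL (1\<^sub>m (2^g))" and cUL: "UL \<in> carrier_mat (2^k) (2^k)"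
    and supp: "supported_on n R0 U" and clean: "dressed_cleanable n k g V R0"
  shows "UL \<in> clifford k 0"
proof -
  have comm: "UL * PL = PL * UL" if PL: "PL \<in> pauli_group k" for PL
  proof -
    obtain A PJ where A: "PJ \<in> pauli_group g" "supported_on n ({..<n} - R0) A" "dressed_CSP n k g V A"
        "implements k g V A PL PJ"
      using clean PL unfolding dressed_cleanable_def by blast
    have cA: "A \<in> carrier_mat N N" using A(2) supp_carrier by auto
    have comA: "A * PP = PP * A" using A(3) unfolding dressed_CSP_def CSP_def by auto
    have UA: "U * A = A * U" by (rule supp_commute[OF supp A(2)]) auto
    show ?thesis
      by (rule commute_logical[OF cU com imp cUL cA comA _ _ A(1) UA])
         (use A(4) in \<open>auto simp: implements_def\<close>)
  qed
  have "supported_on k {} UL"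
  proof (rule commutant[OF cUL])
    fix q assume "q < k" "q \<notin> {}"
    show "UL * Zq k q = Zq k q * UL \<and> UL * Xq k q = Xq k q * UL"
      using comm[OF Zq_group] comm[OF Xq_group] by simp
  qed
  then have "UL = UL $$ (0,0) \<cdot>\<^sub>m 1\<^sub>m (2^k)" by (rule supp_empty_scalar)
  then show ?thesis by auto
qed

end




lemma sm_r: "A \<in> carrier_mat D D \<Longrightarrow> B \<in> carrier_mat D D \<Longrightarrow> A * (c \<cdot>\<^sub>m B) = c \<cdot>\<^sub>m (A * (B :: complex mat))"
  by (rule mult_smult_distrib)
lemma sm_l: "A \<in> carrier_mat D D \<Longrightarrow> B \<in> carrier_mat D D \<Longrightarrow> (c \<cdot>\<^sub>m A) * B = c \<cdot>\<^sub>m (A * (B :: complex mat))"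
  by (rule mult_smult_assoc_mat)

lemma comm_rel:
  fixes W P :: "complex mat"
  assumes cW: "W \<in> carrier_mat D D" and cP: "P \<in> carrier_mat D D" and PP1: "P * P = 1\<^sub>m D"
    and h: "W * P * mat_adjoint W * P = c \<cdot>\<^sub>m 1\<^sub>m D" and u: "mat_adjoint W * W = 1\<^sub>m D"
    and u1: "W * mat_adjoint W = 1\<^sub>m D" and D: "0 < D"
  shows "W * P = c \<cdot>\<^sub>m (P * W)" "c * c = 1"
proof -
  note S = assoc_sq[of _ D] mult_sq[of _ D] sm_r[of _ D] sm_l[of _ D] smult_smult_mat
  have cWa: "mat_adjoint W \<in> carrier_mat D D" using cW by simp
  have "W * P = W * P * (mat_adjoint W * W)" using cW cP u by simp
  also have "\<dots> = (W * P * mat_adjoint W * P) * (P * W)"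
  proof -
    have "P * (P * W) = W" using PP1 cP cW
      by (metis assoc_mult_mat left_mult_one_mat)
    then show ?thesis using cW cP cWa by (simp add: S)
  qed
  also have "\<dots> = c \<cdot>\<^sub>m (P * W)" unfolding h using cW cP by (simp add: S)
  finally show WP: "W * P = c \<cdot>\<^sub>m (P * W)" .
  have PWP: "P * W * P = c \<cdot>\<^sub>m W"
  proof -
    have "P * W * P = P * (W * P)" using cP cW by simp
    also have "\<dots> = c \<cdot>\<^sub>m (P * (P * W))" unfolding WP using cP cW by (simp add: S)
    also have "P * (P * W) = W" using PP1 cP cW by (metis assoc_mult_mat left_mult_one_mat)
    finally show ?thesis .
  qed
  have "W = P * (P * W * P) * P"
  proof -
    have "P * (P * W * P) * P = (P * P) * W * (P * P)" using cP cW by (simp add: S)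
    then show ?thesis using PP1 cW by simp
  qed
  also have "\<dots> = (c * c) \<cdot>\<^sub>m W"
  proof -
    have PWP': "P * (W * P) = c \<cdot>\<^sub>m W" using PWP cP cW by simp
    show ?thesis unfolding PWP using cP cW by (simp add: S PWP')
  qed
  finally have Wc: "W = (c * c) \<cdot>\<^sub>m W" .
  obtain i j where ij: "i < D" "j < D" "W $$ (i,j) \<noteq> 0" using nz_entry[OF cW cWa u1 D] by blast
  have "W $$ (i,j) = ((c * c) \<cdot>\<^sub>m W) $$ (i,j)" using Wc by simp
  then have "W $$ (i,j) = (c * c) * W $$ (i,j)" using ij cW by simp
  then show "c * c = 1" using ij(3) by simp
qed


lemma sgn1_z: "sgn1 (if cz = -1 then (if cx = -1 then PY else PX) else (if cx = -1 then PZ else PI)) PZ = cz"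
  if "cz = 1 \<or> cz = -1" for cz cx :: complex
  using that by (auto simp: sgn1_def)
lemma sgn1_x: "sgn1 (if cz = -1 then (if cx = -1 then PY else PX) else (if cx = -1 then PZ else PI)) PX = cx"
  if "cx = 1 \<or> cx = -1" for cz cx :: complex
  using that by (auto simp: sgn1_def)

lemma pauli_from_commutators:
  fixes UL :: "complex mat"
  assumes cUL: "UL \<in> carrier_mat (2^k) (2^k)" and u1: "UL * mat_adjoint UL = 1\<^sub>m (2^k)"
    and u2: "mat_adjoint UL * UL = 1\<^sub>m (2^k)"
    and h: "\<And>a. \<exists>c. UL * ps k a * mat_adjoint UL * ps k a = c \<cdot>\<^sub>m 1\<^sub>m (2^k)"
  shows "UL \<in> clifford k (Suc 0)"
proof -
  let ?D = "(2::nat)^k"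
  note S = assoc_sq[of _ ?D] mult_sq[of _ ?D] sm_r[of _ ?D] sm_l[of _ ?D] smult_smult_mat
  have rel: "\<exists>c. UL * ps k a = c \<cdot>\<^sub>m (ps k a * UL) \<and> (c = 1 \<or> c = -1)" for a
  proof -
    obtain c where c: "UL * ps k a * mat_adjoint UL * ps k a = c \<cdot>\<^sub>m 1\<^sub>m ?D" using h by blast
    have "UL * ps k a = c \<cdot>\<^sub>m (ps k a * UL)" "c * c = 1"
      using comm_rel[OF cUL ps_carrier ps_sq c u2 u1] by auto
    then show ?thesis using square_eq_1_iff by blast
  qed
  have "\<forall>q. \<exists>cz cx. (q < k \<longrightarrow> UL * Zq k q = cz \<cdot>\<^sub>m (Zq k q * UL) \<and> (cz = 1 \<or> cz = -1) \<and>
        UL * Xq k q = cx \<cdot>\<^sub>m (Xq k q * UL) \<and> (cx = 1 \<or> cx = -1))"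
    using rel unfolding Zq_def Xq_def by blast
  then obtain cz cx where czx: "\<And>q. q < k \<Longrightarrow> UL * Zq k q = cz q \<cdot>\<^sub>m (Zq k q * UL) \<and> (cz q = 1 \<or> cz q = -1) \<and>
        UL * Xq k q = cx q \<cdot>\<^sub>m (Xq k q * UL) \<and> (cx q = 1 \<or> cx q = -1)"
    by metis
  define pQ where "pQ i = (if cz i = -1 then (if cx i = -1 then PY else PX) else (if cx i = -1 then PZ else PI))" for i
  let ?Q = "ps k pQ"
  let ?W = "UL * ?Q"
  have cW: "?W \<in> carrier_mat ?D ?D" using cUL by simp
  have "supported_on k {} ?W"
  proof (rule commutant[OF cW])
    fix q assume q: "q < k" "q \<notin> {}"
    have QZ: "?Q * Zq k q = cz q \<cdot>\<^sub>m (Zq k q * ?Q)"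
      unfolding Zq_def using ps_comm[of k pQ] csgn_single[OF q(1)] sgn1_z czx[OF q(1)]
      by (simp add: pQ_def)
    have QX: "?Q * Xq k q = cx q \<cdot>\<^sub>m (Xq k q * ?Q)"
      unfolding Xq_def using ps_comm[of k pQ] csgn_single[OF q(1)] sgn1_x czx[OF q(1)]
      by (simp add: pQ_def)
    have z: "UL * Zq k q = cz q \<cdot>\<^sub>m (Zq k q * UL)" "cz q * cz q = 1" and
         x: "UL * Xq k q = cx q \<cdot>\<^sub>m (Xq k q * UL)" "cx q * cx q = 1"
      using czx[OF q(1)] by auto
    have "?W * Zq k q = UL * (?Q * Zq k q)" using cUL by (simp add: S)
    also have "\<dots> = cz q \<cdot>\<^sub>m ((UL * Zq k q) * ?Q)" unfolding QZ using cUL by (simp add: S)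
    also have "\<dots> = Zq k q * ?W" unfolding z(1) using cUL by (simp add: S z(2) one_smult_mat')
    finally have 1: "?W * Zq k q = Zq k q * ?W" .
    have "?W * Xq k q = UL * (?Q * Xq k q)" using cUL by (simp add: S)
    also have "\<dots> = cx q \<cdot>\<^sub>m ((UL * Xq k q) * ?Q)" unfolding QX using cUL by (simp add: S)
    also have "\<dots> = Xq k q * ?W" unfolding x(1) using cUL by (simp add: S x(2) one_smult_mat')
    finally have 2: "?W * Xq k q = Xq k q * ?W" .
    show "?W * Zq k q = Zq k q * ?W \<and> ?W * Xq k q = Xq k q * ?W" using 1 2 by simp
  qed
  then have We: "?W = ?W $$ (0,0) \<cdot>\<^sub>m 1\<^sub>m ?D" by (rule supp_empty_scalar)
  have "UL = ?W * ?Q" using cUL by (simp add: S ps_sq)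
  also have "\<dots> = ?W $$ (0,0) \<cdot>\<^sub>m ?Q" by (subst We) (simp add: S)
  finally have "UL = ?W $$ (0,0) \<cdot>\<^sub>m ?Q" .
  then show ?thesis using ps_in_group[of k pQ] by auto
qed




lemma smult4: fixes A B C D' :: "complex mat"
  assumes "A \<in> carrier_mat Dm Dm" "B \<in> carrier_mat Dm Dm" "C \<in> carrier_mat Dm Dm" "D' \<in> carrier_mat Dm Dm"
  shows "A * (d \<cdot>\<^sub>m B) * C * (d \<cdot>\<^sub>m D') = (d * d) \<cdot>\<^sub>m (A * B * C * D')"
  using assms by (simp add: assoc_sq[of _ Dm] mult_sq[of _ Dm] sm_r[of _ Dm] sm_l[of _ Dm] smult_smult_mat)

context code_ctx begin

lemma K_step:
  assumes E: "symp E"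
    and cU: "U \<in> carrier_mat N N" and u1: "U * mat_adjoint U = 1\<^sub>m N" and u2: "mat_adjoint U * U = 1\<^sub>m N"
    and com: "U * PP = PP * U"
    and imp: "mat_adjoint V * U * V = kron UL (1\<^sub>m (2^g))" and cUL: "UL \<in> carrier_mat (2^k) (2^k)"
    and reg: "\<forall>j\<le>Suc m. R j \<subseteq> {..<n}"
    and supp: "supported_on n (\<Union>j\<in>{0..Suc m}. R j) U"
    and f: "fwd n E U s" and b: "bwd n E U s"
    and cl1: "dressed_cleanable n k g V (qball n E (R 1) s)"
  shows "\<exists>K. K \<in> carrier_mat N N \<and> K * mat_adjoint K = 1\<^sub>m N \<and> mat_adjoint K * K = 1\<^sub>m N \<and>
      K * PP = PP * K \<and>
      mat_adjoint V * K * V = kron (UL * ps k a * mat_adjoint UL * ps k a) (1\<^sub>m (2^g)) \<and>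
      supported_on n (\<Union>j\<in>{0..m}. (if j = 0 then R 0 else R (Suc j))) K \<and>
      fwd n E K (s + s) \<and> bwd n E K (s + s)"
proof -
  define C1 where "C1 = {..<n} - qball n E (R 1) s"
  obtain A PJ where A: "PJ \<in> pauli_group g" "supported_on n C1 A" "dressed_CSP n k g V A"
      "implements k g V A (ps k a) PJ"
    using cl1 ps_in_group[of k a] unfolding dressed_cleanable_def C1_def by blast
  have impA: "mat_adjoint V * A * V = kron (ps k a) PJ" using A(4) unfolding implements_def by auto
  obtain p d bb where pd: "\<forall>q<n. q \<notin> C1 \<longrightarrow> p q = PI" "ps n p * PP = PP * ps n p"
      "mat_adjoint V * ps n p * V = d \<cdot>\<^sub>m kron (ps k a) (ps g bb)"
    using pauli_extract[OF A(2) impA A(1)] by blast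
  let ?s = "ps n p"
  let ?K = "U * ?s * mat_adjoint U * ?s"
  have cs: "?s \<in> carrier_mat N N" by simp
  have cUa: "mat_adjoint U \<in> carrier_mat N N" using cU by simp
  note S = assoc_sq[of _ N] mult_sq[of _ N] sm_r[of _ N] sm_l[of _ N] smult_smult_mat
  have ss: "?s * (?s * W) = W" if "W \<in> carrier_mat N N" for W using ps_ps[OF that] .
  have uu1: "U * (mat_adjoint U * W) = W" if "W \<in> carrier_mat N N" for W using cancel_r[OF u1 cU that] .
  have uu2: "mat_adjoint U * (U * W) = W" if "W \<in> carrier_mat N N" for W using cancel_l[OF u2 cU that] .
  have cK: "?K \<in> carrier_mat N N" using cU by (simp add: mult_sq[of _ N])
  have Kadj: "mat_adjoint ?K = ?s * (U * (?s * mat_adjoint U))" by (rule K_adj[OF cU])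
  have KK1: "?K * mat_adjoint ?K = 1\<^sub>m N"
    unfolding Kadj using cU cUa by (simp add: S ss uu1 uu2 ps_sq u1 u2)
  have KK2: "mat_adjoint ?K * ?K = 1\<^sub>m N"
    unfolding Kadj using cU cUa by (simp add: S ss uu1 uu2 ps_sq u1 u2)
  have comUa: "mat_adjoint U * PP = PP * mat_adjoint U" by (rule pPP[OF com cU])
  have comK: "?K * PP = PP * ?K"
  proof -
    have 1: "U * ?s * PP = PP * (U * ?s)" by (rule comm_mult[OF cU cs cPi com pd(2)])
    have 2: "U * ?s * mat_adjoint U * PP = PP * (U * ?s * mat_adjoint U)"
      by (rule comm_mult[OF _ cUa cPi 1 comUa]) (use cU in \<open>simp add: mult_sq[of _ N]\<close>)
    show ?thesis by (rule comm_mult[OF _ cs cPi 2 pd(2)]) (use cU in \<open>simp add: mult_sq[of _ N]\<close>)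
  qed
  have impUa: "mat_adjoint V * mat_adjoint U * V = kron (mat_adjoint UL) (1\<^sub>m (2^g))"
    using impl_adj[OF cU] imp by (simp add: kron_adj)
  let ?D = "kron (ps k a) (ps g bb)"
  have cD: "?D \<in> carrier_mat M M" unfolding Mpow by (rule kron_carrier) auto
  have dd: "d * d = 1"
  proof -
    have "1\<^sub>m M = mat_adjoint V * (?s * ?s) * V" using VtV by (simp add: ps_sq)
    also have "\<dots> = (d \<cdot>\<^sub>m ?D) * (d \<cdot>\<^sub>m ?D)" using impl_mult[OF cs cs pd(2)] pd(3) by simp
    also have "\<dots> = (d * d) \<cdot>\<^sub>m (?D * ?D)"
      using cD by (simp add: sm_r[of _ M] sm_l[of _ M] smult_smult_mat)
    also have "?D * ?D = 1\<^sub>m M"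
      by (simp add: kron_mult[of _ "2^k" _ _ "2^g"] ps_sq kron_I)
    finally have "1\<^sub>m M = (d * d) \<cdot>\<^sub>m 1\<^sub>m M" .
    then have "(1\<^sub>m M :: complex mat) $$ (0,0) = ((d * d) \<cdot>\<^sub>m 1\<^sub>m M) $$ (0,0)" by simp
    then show ?thesis by simp
  qed
  have impK: "mat_adjoint V * ?K * V = kron (UL * ps k a * mat_adjoint UL * ps k a) (1\<^sub>m (2^g))"
  proof -
    have c1: "U * ?s \<in> carrier_mat N N" "U * ?s * mat_adjoint U \<in> carrier_mat N N" using cU by (auto simp: mult_sq[of _ N])
    have "mat_adjoint V * ?K * V = (mat_adjoint V * (U * ?s * mat_adjoint U) * V) * (mat_adjoint V * ?s * V)"
      by (rule impl_mult[OF c1(2) cs pd(2)])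
    also have "mat_adjoint V * (U * ?s * mat_adjoint U) * V = (mat_adjoint V * (U * ?s) * V) * (mat_adjoint V * mat_adjoint U * V)"
      by (rule impl_mult[OF c1(1) cUa comUa])
    also have "mat_adjoint V * (U * ?s) * V = (mat_adjoint V * U * V) * (mat_adjoint V * ?s * V)"
      by (rule impl_mult[OF cU cs pd(2)])
    finally have "mat_adjoint V * ?K * V = kron UL (1\<^sub>m (2^g)) * (d \<cdot>\<^sub>m ?D) * kron (mat_adjoint UL) (1\<^sub>m (2^g)) * (d \<cdot>\<^sub>m ?D)"
      unfolding imp impUa pd(3) .
    also have "\<dots> = (d * d) \<cdot>\<^sub>m (kron UL (1\<^sub>m (2^g)) * ?D * kron (mat_adjoint UL) (1\<^sub>m (2^g)) * ?D)"
      by (rule smult4) (use cUL cD in \<open>auto simp: Mpow\<close>)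
    also have "kron UL (1\<^sub>m (2^g)) * ?D * kron (mat_adjoint UL) (1\<^sub>m (2^g)) * ?D =
        kron (UL * ps k a * mat_adjoint UL * ps k a) (1\<^sub>m (2^g))"
      using cUL by (simp add: kron_mult[of _ "2^k" _ _ "2^g"] ps_sq mult_sq[of _ "2^k"])
    finally show ?thesis using dd by (simp add: one_smult_mat')
  qed
  let ?Dr = "\<Union>j\<in>{0..Suc m}. R j"
  have sC1: "supported_on n C1 ?s" by (rule ps_supp) (use pd(1) in auto)
  have C1n: "C1 \<subseteq> {..<n}" unfolding C1_def by auto
  have s1: "supported_on n ?Dr (?s * mat_adjoint U * ?s)" by (rule supp_conj_ps[OF supp_adj[OF supp]])
  have sK1: "supported_on n ?Dr ?K"
  proof -
    have "supported_on n ?Dr (U * (?s * mat_adjoint U * ?s))" by (rule supp_mult[OF supp s1])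
    moreover have "U * (?s * mat_adjoint U * ?s) = ?K" using cU by (simp add: S)
    ultimately show ?thesis by simp
  qed
  have sK2: "supported_on n (qball n E C1 s) ?K"
  proof -
    have "supported_on n (qball n E C1 s) (U * ?s * mat_adjoint U)" using f C1n sC1 unfolding fwd_def by blast
    moreover have "supported_on n (qball n E C1 s) ?s"
      by (rule supp_mono[OF sC1]) (use qball_self[of C1 n E s] C1n in auto)
    ultimately show ?thesis by (rule supp_mult)
  qed
  have disj: "R 1 \<inter> qball n E C1 s = {}" unfolding C1_def by (rule qball_disj[OF E]) (use reg in auto)
  have sK: "supported_on n (\<Union>j\<in>{0..m}. (if j = 0 then R 0 else R (Suc j))) ?K"
  proof (rule supp_mono[OF supp_inter[OF sK1 sK2]])
    show "?Dr \<inter> qball n E C1 s \<subseteq> (\<Union>j\<in>{0..m}. (if j = 0 then R 0 else R (Suc j)))"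
    proof
      fix x assume x: "x \<in> ?Dr \<inter> qball n E C1 s"
      then obtain j where j: "j \<le> Suc m" "x \<in> R j" by auto
      have "j \<noteq> 1" using disj x j by auto
      then show "x \<in> (\<Union>j\<in>{0..m}. (if j = 0 then R 0 else R (Suc j)))"
      proof (cases j)
        case 0 then show ?thesis using j by (intro UN_I[of 0]) auto
      next
        case (Suc j') then show ?thesis using j \<open>j \<noteq> 1\<close> by (intro UN_I[of j']) auto
      qed
    qed
  qed
  show ?thesis
    using cK KK1 KK2 comK impK sK K_fwd_bwd[OF E cU f b] by blast
qed

end




lemma enat_pow_double: "1 \<le> j \<Longrightarrow> 2 ^ (j - 1) * (s + s) = 2 ^ j * (s :: enat)"
  by (cases j) (auto simp: mult_2[symmetric] mult_ac)

lemma cliff1_form: "P \<in> clifford k (Suc 0) \<Longrightarrow> \<exists>e a. P = e \<cdot>\<^sub>m ps k a"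
proof -
  assume "P \<in> clifford k (Suc 0)"
  then obtain c P0 where "P = c \<cdot>\<^sub>m P0" "P0 \<in> pauli_group k" by auto
  moreover then obtain c' a where "P0 = c' \<cdot>\<^sub>m ps k a" using pauli_group_form by blast
  ultimately show ?thesis by (auto simp: smult_smult_mat)
qed

lemma comm_smult: fixes X :: "complex mat"
  assumes cX: "X \<in> carrier_mat (2^k) (2^k)"
  shows "X * (e \<cdot>\<^sub>m ps k a) * mat_adjoint X * mat_adjoint (e \<cdot>\<^sub>m ps k a) =
     (e * cnj e) \<cdot>\<^sub>m (X * ps k a * mat_adjoint X * ps k a)"
  using cX by (simp add: adj_smult ps_adj assoc_sq[of _ "2^k"] mult_sq[of _ "2^k"] sm_r[of _ "2^k"]
      sm_l[of _ "2^k"] smult_smult_mat mult.commute)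

context code_ctx begin

lemma main_ind:
  assumes E: "symp E"
  shows "U \<in> carrier_mat N N \<Longrightarrow> U * mat_adjoint U = 1\<^sub>m N \<Longrightarrow> mat_adjoint U * U = 1\<^sub>m N \<Longrightarrow>
    U * PP = PP * U \<Longrightarrow> mat_adjoint V * U * V = kron UL (1\<^sub>m (2^g)) \<Longrightarrow>
    UL \<in> carrier_mat (2^k) (2^k) \<Longrightarrow>
    \<forall>j\<le>m. R j \<subseteq> {..<n} \<Longrightarrow> supported_on n (\<Union>j\<in>{0..m}. R j) U \<Longrightarrow>
    fwd n E U s \<Longrightarrow> bwd n E U s \<Longrightarrow>
    dressed_cleanable n k g V (R 0) \<Longrightarrow>
    \<forall>j\<in>{1..m}. dressed_cleanable n k g V (qball n E (R j) (2 ^ (j - 1) * s)) \<Longrightarrow>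
    UL \<in> clifford k m"
proof (induction m arbitrary: U UL R s)
  case 0
  have "supported_on n (R 0) U" using "0.prems"(8) by simp
  then show ?case using base_case[OF "0.prems"(1) "0.prems"(4) "0.prems"(5) "0.prems"(6) _ "0.prems"(11)] by simp
next
  case (Suc m)
  note P = Suc.prems
  have "(1::nat) \<in> {1..Suc m}" by simp
  then have "dressed_cleanable n k g V (qball n E (R 1) (2 ^ (1 - 1) * s))" using P(12) by blast
  then have cl1: "dressed_cleanable n k g V (qball n E (R 1) s)" by simp
  define R' where "R' j = (if j = 0 then R 0 else R (Suc j))" for j
  have KL: "UL * ps k a * mat_adjoint UL * ps k a \<in> clifford k m" for a
  proof -
    obtain K where K: "K \<in> carrier_mat N N" "K * mat_adjoint K = 1\<^sub>m N" "mat_adjoint K * K = 1\<^sub>m N"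
      "K * PP = PP * K"
      "mat_adjoint V * K * V = kron (UL * ps k a * mat_adjoint UL * ps k a) (1\<^sub>m (2^g))"
      "supported_on n (\<Union>j\<in>{0..m}. (if j = 0 then R 0 else R (Suc j))) K"
      "fwd n E K (s + s)" "bwd n E K (s + s)"
      using K_step[OF E P(1) P(2) P(3) P(4) P(5) P(6) P(7) P(8) P(9) P(10) cl1, of a] by blast
    show ?thesis
    proof (rule Suc.IH[OF K(1-5)])
      show "UL * ps k a * mat_adjoint UL * ps k a \<in> carrier_mat (2^k) (2^k)"
        using P(6) by (simp add: mult_sq[of _ "2^k"])
      show "\<forall>j\<le>m. R' j \<subseteq> {..<n}" using P(7) by (auto simp: R'_def)
      show "supported_on n (\<Union>j\<in>{0..m}. R' j) K" using K(6) by (simp add: R'_def)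
      show "fwd n E K (s + s)" "bwd n E K (s + s)" using K by auto
      show "dressed_cleanable n k g V (R' 0)" using P(11) by (simp add: R'_def)
      show "\<forall>j\<in>{1..m}. dressed_cleanable n k g V (qball n E (R' j) (2 ^ (j - 1) * (s + s)))"
      proof
        fix j assume j: "j \<in> {1..m}"
        then have "Suc j \<in> {1..Suc m}" by auto
        then have "dressed_cleanable n k g V (qball n E (R (Suc j)) (2 ^ (Suc j - 1) * s))" using P(12) by blast
        moreover have "2 ^ (j - 1) * (s + s) = 2 ^ (Suc j - 1) * s" using j enat_pow_double[of j s] by simp
        ultimately show "dressed_cleanable n k g V (qball n E (R' j) (2 ^ (j - 1) * (s + s)))"
          using j by (simp add: R'_def)
      qed
    qed
  qed
  have uUL: "UL * mat_adjoint UL = 1\<^sub>m (2^k)" "mat_adjoint UL * UL = 1\<^sub>m (2^k)"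
    using UL_unitary[OF P(1) P(2) P(3) P(4) P(5) P(6)] by auto
  show ?case
  proof (cases m)
    case 0
    have "\<exists>c. UL * ps k a * mat_adjoint UL * ps k a = c \<cdot>\<^sub>m 1\<^sub>m (2^k)" for a
      using KL[of a] 0 by auto
    then show ?thesis using pauli_from_commutators[OF P(6) uUL] 0 by simp
  next
    case (Suc j)
    have "UL * Pc * mat_adjoint UL * mat_adjoint Pc \<in> clifford k (Suc j)" if Pc: "Pc \<in> clifford k (Suc 0)" for Pc
    proof -
      obtain e a where ea: "Pc = e \<cdot>\<^sub>m ps k a" using cliff1_form[OF Pc] by blast
      have "(e * cnj e) \<cdot>\<^sub>m (UL * ps k a * mat_adjoint UL * ps k a) \<in> clifford k (Suc j)"
        using cliff_smult KL[of a] Suc by blast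
      then show ?thesis unfolding ea comm_smult[OF P(6)] .
    qed
    then show ?thesis using P(6) Suc by simp
  qed
qed

end

theorem lemma8:
  fixes n k g m :: nat and E :: "nat \<Rightarrow> nat \<Rightarrow> bool"
    and S :: "complex mat set" and V U UL :: "complex mat" and R :: "nat \<Rightarrow> nat set"
  assumes code: "stabilizer_subsystem_code n k g S V"
    and graph: "symp E"
    and regions: "\<forall>j\<le>m. R j \<subseteq> {..<n}"
    and unitary: "U \<in> carrier_mat (2 ^ n) (2 ^ n)" "U * mat_adjoint U = 1\<^sub>m (2 ^ n)"
                 "mat_adjoint U * U = 1\<^sub>m (2 ^ n)"
    and bare: "bare_CSP n k g V U"
    and impl: "implements k g V U UL (1\<^sub>m (2 ^ g))"
    and supp: "supported_on n (\<Union>j\<in>{0..m}. R j) U"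
    and clean0: "dressed_cleanable n k g V (R 0)"
    and cleanj: "\<forall>j\<in>{1..m}. dressed_cleanable n k g V (qball n E (R j) (2 ^ (j - 1) * spread n E U))"
  shows "UL \<in> clifford k m"
proof -
  interpret code_ctx n k g S V using code by unfold_locales
  have com: "U * code_proj V = code_proj V * U" using bare unfolding bare_CSP_def CSP_def by auto
  have imp: "mat_adjoint V * U * V = kron UL (1\<^sub>m (2^g))" "UL \<in> carrier_mat (2^k) (2^k)"
    using impl unfolding implements_def by auto
  have f: "fwd n E U (spread n E U)" by (rule spread_fwd[OF unitary(1,2)])
  have b: "bwd n E U (spread n E U)" by (rule fwd_bwd[OF graph unitary(1) unitary(3) f])
  show ?thesis
    by (rule main_ind[OF graph unitary(1,2,3) com imp regions supp f b clean0 cleanj])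
qed


end
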